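(* Under the thermodynamic assumptions (TA) below, for every state $\mathbf z\in\mathcal Z$ the operator $\mathcal R^{(E)}(\mathbf z)\colon W^{1,3}(\Omega)^{\nu+4}\to(W^{1,3}(\Omega)^{\nu+4})^\ast$ is self-adjoint ($\langle\boldsymbol\varphi,\mathcal R^{(E)}\boldsymbol\psi\rangle=\langle\boldsymbol\psi,\mathcal R^{(E)}\boldsymbol\varphi\rangle$) and semi-elliptic ($\langle\boldsymbol\varphi,\mathcal R^{(E)}\boldsymbol\varphi\rangle\ge0$), and it satisfies the non-interaction condition $\mathcal R^{(E)}(\mathbf z)\frac{\delta H}{\delta\mathbf z}=0$, where $\frac{\delta H}{\delta\mathbf z}=\big(-\tfrac{\mathbf v\cdot\mathbf v}{2}+\mu_1,\dots,-\tfrac{\mathbf v\cdot\mathbf v}{2}+\mu_\nu,\ \mathbf v,\ T\big)$ is the functional derivative of $H(\mathbf z)=\int_\Omega\frac{\mathbf M\cdot\mathbf M}{2\rho}+u(\rho_1,\dots,\rho_\nu,s)\,dx$ (assumed to lie in $W^{1,3}(\Omega)^{\nu+4}$).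
   Context: Let $\Omega\subset\mathbb R^3$ be a bounded Lipschitz domain; Cartesian coordinates. Fix $\nu\ge2$. States $\mathbf z=(\rho_1,\dots,\rho_\nu,\mathbf M,s)\in W^{1,3}(\Omega)^{\nu+4}$, $\mathcal Z$ = states with $\rho:=\sum_\alpha\rho_\alpha\ge\varrho>0$ a.e.; $\mathbf v=\mathbf M/\rho$, $(\nabla\mathbf w)_{ij}=\partial_jw_i$, $\mathbf D=\frac12(\nabla\mathbf v+\nabla\mathbf v^\top)$. A smooth internal energy density $u(\rho_1,\dots,\rho_\nu,s)$ is given; $T=\partial u/\partial s$, $\mu_\alpha=\partial u/\partial\rho_\alpha$ (evaluated at the state). Coefficient functions $\lambda,\zeta,\kappa,B_\alpha,B_{\alpha\beta},\mathbb L_{\alpha\beta}$ ($\alpha,\beta=1..\nu$) on $\Omega$ with $\mathbb L_{\alpha\beta}\in L^{1+\varepsilon}(\Omega)$, $\lambda,\kappa,\zeta,B_\alpha,B_{\alpha\beta}\in L^{3+\varepsilon}(\Omega)$, $\varepsilon>0$, and $T,1/T,\mu_\alpha$ regular enough that all integrals below are finite. Thermodynamic assumptions (TA): $T>0$, $\zeta\ge0$, $\lambda\ge0$; $B_{\alpha\beta}=B_{\beta\alpha}$, $\mathbb L_{\alpha\beta}=\mathbb L_{\beta\alpha}$; the $(\nu+1)\times(\nu+1)$ matrix $\mathfrak B$ with $\mathfrak B_{00}=\kappa T^2$, $\mathfrak B_{0\alpha}=\mathfrak B_{\alpha0}=B_\alpha$, $\mathfrak B_{\alpha\beta}=B_{\alpha\beta}$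 and the matrix $(\mathbb L_{\alpha\beta})$ are pointwise positive semidefinite; $\sum_\beta B_\beta=0$, and $\sum_\beta B_{\alpha\beta}=\sum_\beta\mathbb L_{\alpha\beta}=0$ for every $\alpha$. For $\boldsymbol\varphi=(\varphi_{\rho_1},..,\varphi_{\rho_\nu},\varphi_{\mathbf M},\varphi_s)$, set $X_0(\boldsymbol\varphi)=\nabla(\varphi_s/T)$, $X_\alpha(\boldsymbol\varphi)=\nabla(\varphi_{\rho_\alpha}-\mu_\alpha\varphi_s/T)$. The operator $\mathcal R^{(E)}(\mathbf z)$ is defined by $$\langle\boldsymbol\varphi,\mathcal R^{(E)}\boldsymbol\psi\rangle=\int_\Omega\tfrac{\zeta T}{2}\operatorname{tr}\Big[\big(\nabla\varphi_{\mathbf M}+\nabla\varphi_{\mathbf M}^\top-\tfrac{2}{T}\mathbf D\varphi_s\big)\big(\nabla\psi_{\mathbf M}+\nabla\psi_{\mathbf M}^\top-\tfrac{2}{T}\mathbf D\psi_s\big)\Big]$$ $$+T\big(\lambda-\tfrac{2\zeta}{3}\big)\big(\operatorname{div}\varphi_{\mathbf M}-\tfrac1T\operatorname{div}\mathbf v\,\varphi_s\big)\big(\operatorname{div}\psi_{\mathbf M}-\tfrac1T\operatorname{div}\mathbf v\,\psi_s\big)+\sum_{a,b=0}^{\nu}\mathfrak B_{ab}X_a(\boldsymbol\varphi)\cdot X_b(\boldsymbol\psi)+T\sum_{\alpha,\beta=1}^\nu\big(\varphi_{\rho_\alpha}-\tfrac{\mu_\alpha}{T}\varphi_s\big)\mathbb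 L_{\alpha\beta}\big(\psi_{\rho_\beta}-\tfrac{\mu_\beta}{T}\psi_s\big)dx.$$ *)

theory Defs
  imports "HOL-Analysis.Analysis"
begin

type_synonym pt = "real^3"

fun Ck :: "nat \<Rightarrow> ('a::euclidean_space \<Rightarrow> real) \<Rightarrow> bool" where
  "Ck 0 f \<longleftrightarrow> continuous_on UNIV f"
| "Ck (Suc n) f \<longleftrightarrow> (\<forall>x. f differentiable (at x)) \<and>
      (\<forall>b\<in>Basis. Ck n (\<lambda>x. frechet_derivative f (at x) b))"

definition smooth_fun :: "('a::euclidean_space \<Rightarrow> real) \<Rightarrow> bool" where
  "smooth_fun f \<longleftrightarrow> (\<forall>n. Ck n f)"

definition lipschitz_domain :: "pt set \<Rightarrow> bool" where
  "lipschitz_domain \<Omega> \<longleftrightarrow> open \<Omega> \<and> connected \<Omega> \<and> \<Omega> \<noteq> {} \<and> bounded \<Omega> \<and>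
    (\<forall>x\<in>frontier \<Omega>. \<exists>r>0. \<exists>Q::real^3^3. orthogonal_matrix Q \<and>
       (\<exists>h::real^2 \<Rightarrow> real. (\<exists>L. L-lipschitz_on UNIV h) \<and>
          (\<forall>y\<in>ball x r. y \<in> \<Omega> \<longleftrightarrow>
              (Q *v (y - x)) $ 3 < h (vector [(Q *v (y - x)) $ 1, (Q *v (y - x)) $ 2]))))"

definition partial :: "(pt \<Rightarrow> real) \<Rightarrow> 3 \<Rightarrow> pt \<Rightarrow> real" where
  "partial \<phi> i x = frechet_derivative \<phi> (at x) (axis i 1)"

definition test_fun :: "pt set \<Rightarrow> (pt \<Rightarrow> real) \<Rightarrow> bool" where
  "test_fun \<Omega> \<phi> \<longleftrightarrow> smooth_fun \<phi> \<and> compact (closure {x. \<phi> x \<noteq> 0}) \<and>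
                     closure {x. \<phi> x \<noteq> 0} \<subseteq> \<Omega>"

definition is_weak_grad :: "pt set \<Rightarrow> (pt \<Rightarrow> real) \<Rightarrow> (pt \<Rightarrow> real^3) \<Rightarrow> bool" where
  "is_weak_grad \<Omega> f g \<longleftrightarrow>
     (\<forall>K. compact K \<and> K \<subseteq> \<Omega> \<longrightarrow>
        set_integrable lebesgue K f \<and> (\<forall>i. set_integrable lebesgue K (\<lambda>x. g x $ i))) \<and>
     (\<forall>\<phi>. test_fun \<Omega> \<phi> \<longrightarrow> (\<forall>i.
        (LINT x:\<Omega>|lebesgue. f x * partial \<phi> i x) = - (LINT x:\<Omega>|lebesgue. g x $ i * \<phi> x)))"

text \<open>The weak gradient (a representative; determined up to null sets).\<close>
definition wgrad :: "pt set \<Rightarrow> (pt \<Rightarrow> real) \<Rightarrow> pt \<Rightarrow> real^3" where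
  "wgrad \<Omega> f = (SOME g. is_weak_grad \<Omega> f g)"

definition Lp :: "pt set \<Rightarrow> real \<Rightarrow> (pt \<Rightarrow> real) \<Rightarrow> bool" where
  "Lp \<Omega> p f \<longleftrightarrow> set_borel_measurable lebesgue \<Omega> f \<and>
                 set_integrable lebesgue \<Omega> (\<lambda>x. \<bar>f x\<bar> powr p)"

definition W13 :: "pt set \<Rightarrow> (pt \<Rightarrow> real) \<Rightarrow> bool" where
  "W13 \<Omega> f \<longleftrightarrow> Lp \<Omega> 3 f \<and> (\<exists>g. is_weak_grad \<Omega> f g \<and> (\<forall>i. Lp \<Omega> 3 (\<lambda>x. g x $ i)))"

datatype 'k fld = Fld (rho: "'k \<Rightarrow> pt \<Rightarrow> real") (mom: "pt \<Rightarrow> real^3") (ent: "pt \<Rightarrow> real")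

definition in_W13 :: "pt set \<Rightarrow> 'k::finite fld \<Rightarrow> bool" where
  "in_W13 \<Omega> z \<longleftrightarrow> (\<forall>\<alpha>. W13 \<Omega> (rho z \<alpha>)) \<and> (\<forall>i. W13 \<Omega> (\<lambda>x. mom z x $ i)) \<and> W13 \<Omega> (ent z)"

definition total_rho :: "'k::finite fld \<Rightarrow> pt \<Rightarrow> real" where
  "total_rho z x = (\<Sum>\<alpha>\<in>UNIV. rho z \<alpha> x)"

definition vel :: "'k::finite fld \<Rightarrow> pt \<Rightarrow> real^3" where
  "vel z x = (1 / total_rho z x) *\<^sub>R mom z x"

text \<open>(grad w)_{ij} = d_j w_i\<close>
definition grad_vec :: "pt set \<Rightarrow> (pt \<Rightarrow> real^3) \<Rightarrow> pt \<Rightarrow> real^3^3" where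
  "grad_vec \<Omega> w x = (\<chi> i j. wgrad \<Omega> (\<lambda>y. w y $ i) x $ j)"

definition divg :: "pt set \<Rightarrow> (pt \<Rightarrow> real^3) \<Rightarrow> pt \<Rightarrow> real" where
  "divg \<Omega> w x = trace (grad_vec \<Omega> w x)"

definition Dmat :: "pt set \<Rightarrow> 'k::finite fld \<Rightarrow> pt \<Rightarrow> real^3^3" where
  "Dmat \<Omega> z x = (1/2) *\<^sub>R (grad_vec \<Omega> (vel z) x + transpose (grad_vec \<Omega> (vel z) x))"

definition rho_vec :: "'k::finite fld \<Rightarrow> pt \<Rightarrow> real^'k" where
  "rho_vec z x = (\<chi> \<alpha>. rho z \<alpha> x)"

definition temp :: "(real^'k \<Rightarrow> real \<Rightarrow> real) \<Rightarrow> 'k::finite fld \<Rightarrow> pt \<Rightarrow> real" where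
  "temp u z x = deriv (\<lambda>t. u (rho_vec z x) t) (ent z x)"

definition chem :: "(real^'k \<Rightarrow> real \<Rightarrow> real) \<Rightarrow> 'k::finite fld \<Rightarrow> 'k \<Rightarrow> pt \<Rightarrow> real" where
  "chem u z \<alpha> x = deriv (\<lambda>t. u (\<chi> \<beta>. if \<beta> = \<alpha> then t else rho z \<beta> x) (ent z x)) (rho z \<alpha> x)"

definition dH :: "(real^'k \<Rightarrow> real \<Rightarrow> real) \<Rightarrow> 'k::finite fld \<Rightarrow> 'k fld" where
  "dH u z = Fld (\<lambda>\<alpha> x. - (vel z x \<bullet> vel z x) / 2 + chem u z \<alpha> x) (vel z) (temp u z)"

text \<open>The (nu+1)x(nu+1) matrix frak B; index None plays the role of 0.\<close>
definition Bfrak :: "(pt \<Rightarrow> real) \<Rightarrow> (pt \<Rightarrow> real) \<Rightarrow> ('k \<Rightarrow> pt \<Rightarrow> real) \<Rightarrow>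
    ('k \<Rightarrow> 'k \<Rightarrow> pt \<Rightarrow> real) \<Rightarrow> 'k option \<Rightarrow> 'k option \<Rightarrow> pt \<Rightarrow> real" where
  "Bfrak \<kappa> T Bv Bm a b x = (case (a, b) of
      (None, None) \<Rightarrow> \<kappa> x * (T x)\<^sup>2
    | (None, Some \<beta>) \<Rightarrow> Bv \<beta> x
    | (Some \<alpha>, None) \<Rightarrow> Bv \<alpha> x
    | (Some \<alpha>, Some \<beta>) \<Rightarrow> Bm \<alpha> \<beta> x)"

definition Xf :: "pt set \<Rightarrow> (real^'k \<Rightarrow> real \<Rightarrow> real) \<Rightarrow> 'k::finite fld \<Rightarrow> 'k option \<Rightarrow> 'k fld \<Rightarrow> pt \<Rightarrow> real^3" where
  "Xf \<Omega> u z a \<phi> = (case a of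
      None \<Rightarrow> wgrad \<Omega> (\<lambda>y. ent \<phi> y / temp u z y)
    | Some \<alpha> \<Rightarrow> wgrad \<Omega> (\<lambda>y. rho \<phi> \<alpha> y - chem u z \<alpha> y * ent \<phi> y / temp u z y))"

definition RE_integrand :: "pt set \<Rightarrow> (real^'k \<Rightarrow> real \<Rightarrow> real) \<Rightarrow>
    (pt \<Rightarrow> real) \<Rightarrow> (pt \<Rightarrow> real) \<Rightarrow> (pt \<Rightarrow> real) \<Rightarrow> ('k \<Rightarrow> pt \<Rightarrow> real) \<Rightarrow>
    ('k \<Rightarrow> 'k \<Rightarrow> pt \<Rightarrow> real) \<Rightarrow> ('k \<Rightarrow> 'k \<Rightarrow> pt \<Rightarrow> real) \<Rightarrow>
    'k::finite fld \<Rightarrow> 'k fld \<Rightarrow> 'k fld \<Rightarrow> pt \<Rightarrow> real" where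
  "RE_integrand \<Omega> u lam \<zeta> \<kappa> Bv Bm Lm z \<phi> \<psi> x =
    (let T = temp u z x;
         A = (\<lambda>w. grad_vec \<Omega> (mom w) x + transpose (grad_vec \<Omega> (mom w) x)
                    - (2 / T) *\<^sub>R (ent w x *\<^sub>R Dmat \<Omega> z x));
         d = (\<lambda>w. divg \<Omega> (mom w) x - (1 / T) * divg \<Omega> (vel z) x * ent w x);
         r = (\<lambda>w \<alpha>. rho w \<alpha> x - chem u z \<alpha> x / T * ent w x)
     in \<zeta> x * T / 2 * trace (A \<phi> ** A \<psi>)
        + T * (lam x - 2 * \<zeta> x / 3) * d \<phi> * d \<psi>
        + (\<Sum>a\<in>UNIV. \<Sum>b\<in>UNIV. Bfrak \<kappa> (temp u z) Bv Bm a b x *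
              (Xf \<Omega> u z a \<phi> x \<bullet> Xf \<Omega> u z b \<psi> x))
        + T * (\<Sum>\<alpha>\<in>UNIV. \<Sum>\<beta>\<in>UNIV. r \<phi> \<alpha> * Lm \<alpha> \<beta> x * r \<psi> \<beta>))"

text \<open>The pairing < phi, R^(E)(z) psi >.\<close>
definition RE :: "pt set \<Rightarrow> (real^'k \<Rightarrow> real \<Rightarrow> real) \<Rightarrow>
    (pt \<Rightarrow> real) \<Rightarrow> (pt \<Rightarrow> real) \<Rightarrow> (pt \<Rightarrow> real) \<Rightarrow> ('k \<Rightarrow> pt \<Rightarrow> real) \<Rightarrow>
    ('k \<Rightarrow> 'k \<Rightarrow> pt \<Rightarrow> real) \<Rightarrow> ('k \<Rightarrow> 'k \<Rightarrow> pt \<Rightarrow> real) \<Rightarrow>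
    'k::finite fld \<Rightarrow> 'k fld \<Rightarrow> 'k fld \<Rightarrow> real" where
  "RE \<Omega> u lam \<zeta> \<kappa> Bv Bm Lm z \<phi> \<psi> =
     (LINT x:\<Omega>|lebesgue. RE_integrand \<Omega> u lam \<zeta> \<kappa> Bv Bm Lm z \<phi> \<psi> x)"

end

theory Submission
  imports Defs "HOL-Computational_Algebra.Polynomial"
begin

lemma Ck_Suc_imp: "Ck (Suc n) f \<Longrightarrow> Ck n f"
proof (induction n arbitrary: f)
  case 0
  then show ?case
    by (auto simp: continuous_on_eq_continuous_at differentiable_imp_continuous_within)
next
  case (Suc n)
  then show ?case by auto
qed

lemma Ck_mono: "m \<le> n \<Longrightarrow> Ck n f \<Longrightarrow> Ck m f"
proof (induction n)
  case 0 then show ?case by simp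
next
  case (Suc n) then show ?case using Ck_Suc_imp le_Suc_eq by blast
qed

lemma Ck_cong: "Ck n f \<Longrightarrow> (\<And>x. f x = g x) \<Longrightarrow> Ck n g"
proof -
  assume "Ck n f" "\<And>x. f x = g x"
  then have "f = g" by auto
  with \<open>Ck n f\<close> show ?thesis by simp
qed

lemma Ck_const: "Ck n (\<lambda>x. c)"
proof (induction n arbitrary: c)
  case 0 then show ?case by simp
next
  case (Suc n)
  have "frechet_derivative (\<lambda>x. c) (at x) = (\<lambda>h. 0)" for x :: 'a
    by (metis frechet_derivative_at has_derivative_const)
  then show ?case using Suc by simp
qed

lemma Ck_linear: "bounded_linear l \<Longrightarrow> Ck n (l :: 'a::euclidean_space \<Rightarrow> real)"
proof (cases n)
  case 0
  assume "bounded_linear l" then show ?thesis using 0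
    by (simp add: linear_continuous_on)
next
  case (Suc m)
  assume l: "bounded_linear l"
  have "frechet_derivative l (at x) = l" for x
    using l by (metis bounded_linear_imp_has_derivative frechet_derivative_at)
  then show ?thesis using Suc l
    by (auto intro!: Ck_const simp: bounded_linear_imp_differentiable)
qed

lemma fd_add:
  assumes "f differentiable (at x)" "g differentiable (at x)"
  shows "frechet_derivative (\<lambda>x. f x + g x) (at x) b =
         frechet_derivative f (at x) b + frechet_derivative g (at x) b"
proof -
  have "((\<lambda>x. f x + g x) has_derivative (\<lambda>h. frechet_derivative f (at x) h + frechet_derivative g (at x) h)) (at x)"
    using assms by (intro has_derivative_add) (auto simp: frechet_derivative_works)
  then show ?thesis by (metis frechet_derivative_at)
qed

lemma fd_mult:
  fixes f g :: "'a::real_normed_vector \<Rightarrow> real"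
  assumes "f differentiable (at x)" "g differentiable (at x)"
  shows "frechet_derivative (\<lambda>x. f x * g x) (at x) b =
         f x * frechet_derivative g (at x) b + frechet_derivative f (at x) b * g x"
proof -
  have "((\<lambda>x. f x * g x) has_derivative (\<lambda>h. f x * frechet_derivative g (at x) h + frechet_derivative f (at x) h * g x)) (at x)"
    using assms by (intro has_derivative_mult) (auto simp: frechet_derivative_works)
  then show ?thesis by (metis frechet_derivative_at)
qed

lemma Ck_add: "Ck n f \<Longrightarrow> Ck n g \<Longrightarrow> Ck n (\<lambda>x. f x + g x)"
proof (induction n arbitrary: f g)
  case 0 then show ?case by (simp add: continuous_on_add)
next
  case (Suc n)
  have d: "(\<lambda>x. f x + g x) differentiable (at x)" for x
    using Suc.prems by (auto intro: differentiable_add)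
  have "Ck n (\<lambda>x. frechet_derivative (\<lambda>x. f x + g x) (at x) b)" if "b \<in> Basis" for b
    using Suc.IH[of "\<lambda>x. frechet_derivative f (at x) b" "\<lambda>x. frechet_derivative g (at x) b"]
      Suc.prems that by (auto simp: fd_add)
  then show ?case using d by simp
qed

lemma Ck_mult: "Ck n f \<Longrightarrow> Ck n g \<Longrightarrow> Ck n (\<lambda>x. f x * g x)"
proof (induction n arbitrary: f g)
  case 0 then show ?case by (simp add: continuous_on_mult)
next
  case (Suc n)
  have d: "(\<lambda>x. f x * g x) differentiable (at x)" for x
    using Suc.prems by (auto intro: differentiable_mult)
  have "Ck n (\<lambda>x. frechet_derivative (\<lambda>x. f x * g x) (at x) b)" if "b \<in> Basis" for b
  proof -
    have f: "Ck n f" using Ck_Suc_imp Suc.prems(1) by blast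
    have g: "Ck n g" using Ck_Suc_imp Suc.prems(2) by blast
    have f': "Ck n (\<lambda>x. frechet_derivative f (at x) b)" using Suc.prems(1) that by simp
    have g': "Ck n (\<lambda>x. frechet_derivative g (at x) b)" using Suc.prems(2) that by simp
    have 1: "Ck n (\<lambda>x. f x * frechet_derivative g (at x) b)"
      by (rule Suc.IH[OF f g'])
    have 2: "Ck n (\<lambda>x. frechet_derivative f (at x) b * g x)"
      by (rule Suc.IH[OF f' g])
    have "(\<lambda>x. frechet_derivative (\<lambda>x. f x * g x) (at x) b) = (\<lambda>x. f x * frechet_derivative g (at x) b + frechet_derivative f (at x) b * g x)"
      using Suc.prems by (simp add: fd_mult)
    then show ?thesis using Ck_add[OF 1 2] by simp
  qed
  then show ?case using d by simp
qed

lemma Ck_prod: "finite S \<Longrightarrow> (\<And>j. j \<in> S \<Longrightarrow> Ck n (f j)) \<Longrightarrow> Ck n (\<lambda>x. \<Prod>j\<in>S. f j x)"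
  by (induction S rule: finite_induct) (auto intro: Ck_mult Ck_const)

lemma fd_real_scale:
  fixes f :: "real \<Rightarrow> real"
  assumes "f differentiable (at t)"
  shows "frechet_derivative f (at t) h = h * frechet_derivative f (at t) 1"
proof -
  have "linear (frechet_derivative f (at t))"
    using assms frechet_derivative_works has_derivative_linear by blast
  then show ?thesis by (metis linear_cmul mult.comm_neutral real_scaleR_def)
qed

lemma Ck_compose:
  fixes \<beta> :: "real \<Rightarrow> real"
  assumes "\<forall>k. Ck k \<beta>" "Ck n p"
  shows "Ck n (\<lambda>x. \<beta> (p x))"
  using assms
proof (induction n arbitrary: \<beta> p)
  case 0
  then have "continuous_on UNIV \<beta>" "continuous_on UNIV p" by (metis Ck.simps(1))+
  then show ?case using continuous_on_compose2[of UNIV \<beta> UNIV p] by simp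
next
  case (Suc n)
  have db: "\<beta> differentiable (at t)" for t using Suc.prems(1)[rule_format, of 1] by simp
  have dp: "p differentiable (at x)" for x using Suc.prems(2) by simp
  define \<beta>1 where "\<beta>1 t = frechet_derivative \<beta> (at t) 1" for t
  have b1: "\<forall>k. Ck k \<beta>1"
  proof
    fix k
    have "Ck (Suc k) \<beta>" using Suc.prems(1) by blast
    then show "Ck k \<beta>1" unfolding \<beta>1_def Ck.simps(2) Basis_real_def by blast
  qed
  have fdc: "frechet_derivative (\<lambda>x. \<beta> (p x)) (at x) b = \<beta>1 (p x) * frechet_derivative p (at x) b" for x b
  proof -
    have "((\<lambda>x. \<beta> (p x)) has_derivative (\<lambda>h. frechet_derivative \<beta> (at (p x)) (frechet_derivative p (at x) h))) (at x)"
      using diff_chain_at[of p "frechet_derivative p (at x)" x \<beta> "frechet_derivative \<beta> (at (p x))"] db dp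
      unfolding frechet_derivative_works o_def by blast
    then have "frechet_derivative (\<lambda>x. \<beta> (p x)) (at x) = (\<lambda>h. frechet_derivative \<beta> (at (p x)) (frechet_derivative p (at x) h))"
      by (metis frechet_derivative_at)
    then show ?thesis using fd_real_scale[OF db, of "p x" "frechet_derivative p (at x) b"] unfolding \<beta>1_def by (simp add: mult.commute)
  qed
  have d: "(\<lambda>x. \<beta> (p x)) differentiable (at x)" for x
    using differentiable_chain_at[OF dp db] by (simp add: o_def)
  have "Ck n (\<lambda>x. frechet_derivative (\<lambda>x. \<beta> (p x)) (at x) b)" if "b \<in> Basis" for b
  proof -
    have "Ck n (\<lambda>x. \<beta>1 (p x))" using Suc.IH[OF b1] Suc.prems(2) Ck_Suc_imp by blast
    moreover have "Ck n (\<lambda>x. frechet_derivative p (at x) b)" using Suc.prems(2) that by simp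
    ultimately have "Ck n (\<lambda>x. \<beta>1 (p x) * frechet_derivative p (at x) b)" by (rule Ck_mult)
    then show ?thesis by (simp add: fdc)
  qed
  then show ?case using d by simp
qed

definition FP :: "real poly \<Rightarrow> real \<Rightarrow> real" where
  "FP P s = (if s > 0 then poly P (inverse s) * exp (- inverse s) else 0)"

definition QP :: "real poly \<Rightarrow> real poly" where
  "QP P = [:0,0,1:] * (P - pderiv P)"

lemma poly_exp_lim: "((\<lambda>t. poly (Q::real poly) t * exp (- t)) \<longlongrightarrow> 0) at_top"
proof -
  have e: "(\<lambda>t. poly Q t * exp (- t)) = (\<lambda>t. \<Sum>i\<le>degree Q. coeff Q i * (t ^ i / exp t))"
    by (simp add: poly_altdef sum_divide_distrib exp_minus field_simps)
  have "((\<lambda>t. \<Sum>i\<le>degree Q. coeff Q i * (t ^ i / exp t)) \<longlongrightarrow> 0) at_top"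
    by (intro tendsto_null_sum tendsto_mult_right_zero tendsto_power_div_exp_0)
  then show ?thesis by (simp only: e)
qed

lemma FP_deriv_pos:
  assumes "s > 0"
  shows "(FP P has_field_derivative FP (QP P) s) (at s)"
proof -
  have "((\<lambda>s. poly P (inverse s) * exp (- inverse s)) has_field_derivative
     ((- (inverse s ^ 2)) * poly (pderiv P) (inverse s) * exp (- inverse s) +
       poly P (inverse s) * (exp (- inverse s) * (inverse s ^ 2)))) (at s)"
    using assms
    by (auto intro!: derivative_eq_intros simp: power2_eq_square)
  moreover have "(- (inverse s ^ 2)) * poly (pderiv P) (inverse s) * exp (- inverse s) +
       poly P (inverse s) * (exp (- inverse s) * (inverse s ^ 2)) = FP (QP P) s"
    using assms by (simp add: FP_def QP_def algebra_simps power2_eq_square)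
  ultimately have "((\<lambda>s. poly P (inverse s) * exp (- inverse s)) has_field_derivative FP (QP P) s) (at s)"
    by simp
  then show ?thesis
    by (rule has_field_derivative_transform_within_open[where S="{0<..}"]) (use assms in \<open>auto simp: FP_def\<close>)
qed

lemma FP_deriv_neg:
  assumes "s < 0"
  shows "(FP P has_field_derivative FP (QP P) s) (at s)"
proof -
  have "((\<lambda>s. 0) has_field_derivative 0) (at s)" by simp
  then have "((\<lambda>s. 0) has_field_derivative FP (QP P) s) (at s)" using assms by (simp add: FP_def)
  then show ?thesis
    by (rule has_field_derivative_transform_within_open[where S="{..<0}"]) (use assms in \<open>auto simp: FP_def\<close>)
qed

lemma FP_deriv_0: "(FP P has_field_derivative FP (QP P) 0) (at 0)"
proof -
  have "((\<lambda>y. (FP P y - FP P 0) / (y - 0)) \<longlongrightarrow> 0) (at 0)"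
  proof (rule filterlim_split_at_real)
    show "((\<lambda>y. (FP P y - FP P 0) / (y - 0)) \<longlongrightarrow> 0) (at_left 0)"
    proof (rule tendsto_eventually)
      show "\<forall>\<^sub>F y in at_left 0. (FP P y - FP P 0) / (y - 0) = (0::real)"
        using eventually_at_left_real[of "-1" "0::real"]
        by (rule eventually_mono) (auto simp: FP_def)
    qed
    have "((\<lambda>t. poly (pCons 0 P) t * exp (- t)) \<longlongrightarrow> 0) at_top" by (rule poly_exp_lim)
    then have "((\<lambda>t. (FP P (inverse t) - FP P 0) / (inverse t - 0)) \<longlongrightarrow> 0) at_top"
    proof (rule Lim_transform_eventually)
      show "\<forall>\<^sub>F t in at_top. poly (pCons 0 P) t * exp (- t) = (FP P (inverse t) - FP P 0) / (inverse t - 0)"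
        using eventually_gt_at_top[of "0::real"]
        by (rule eventually_mono) (auto simp: FP_def field_simps)
    qed
    then show "((\<lambda>y. (FP P y - FP P 0) / (y - 0)) \<longlongrightarrow> 0) (at_right 0)"
      by (simp add: filterlim_at_right_to_top)
  qed
  moreover have "FP (QP P) 0 = 0" by (simp add: FP_def)
  ultimately show ?thesis by (simp add: has_field_derivative_iff)
qed

lemma FP_deriv: "(FP P has_field_derivative FP (QP P) s) (at s)"
  using FP_deriv_pos FP_deriv_neg FP_deriv_0 by (cases s "0::real" rule: linorder_cases) auto

lemma FP_Ck: "Ck k (FP P)"
proof (induction k arbitrary: P)
  case 0
  have "isCont (FP P) s" for s using FP_deriv DERIV_isCont by blast
  then show ?case by (simp add: continuous_on_eq_continuous_at)
next
  case (Suc k)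
  have hd: "(FP P has_derivative (*) (FP (QP P) s)) (at s)" for s
    using FP_deriv[of P s] unfolding has_field_derivative_def by simp
  then have "frechet_derivative (FP P) (at s) 1 = FP (QP P) s" for s
    by (metis frechet_derivative_at mult_1_right)
  then have "(\<lambda>s. frechet_derivative (FP P) (at s) 1) = FP (QP P)" by auto
  moreover have "FP P differentiable (at s)" for s using hd by (rule differentiableI)
  ultimately show ?case using Suc.IH by (simp add: Basis_real_def)
qed

definition Eb :: "real \<Rightarrow> real" where
  "Eb s = (if s > 0 then exp (- inverse s) else 0)"

lemma Eb_FP: "Eb = FP 1"
  by (auto simp: Eb_def FP_def)

lemma Eb_smooth: "Ck k Eb"
  by (simp add: Eb_FP FP_Ck)

lemma Eb_nonneg: "Eb s \<ge> 0" and Eb_le1: "Eb s \<le> 1"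
  by (auto simp: Eb_def)

lemma Eb_pos: "Eb s > 0 \<longleftrightarrow> s > 0"
  by (auto simp: Eb_def)

definition bump :: "pt \<Rightarrow> pt \<Rightarrow> nat \<Rightarrow> pt \<Rightarrow> real" where
  "bump a b n x = (\<Prod>j\<in>UNIV. Eb (real (Suc n) * (x$j - a$j)) * Eb (real (Suc n) * (b$j - x$j)))"

lemma Ck_affine: "Ck k (\<lambda>x::pt. c * (x$j) + d)"
proof -
  have "bounded_linear (\<lambda>x::pt. c * (x$j))"
    by (intro bounded_linear_const_mult bounded_linear_vec_nth)
  then have "Ck k (\<lambda>x::pt. c * (x$j))" by (rule Ck_linear)
  then show ?thesis using Ck_const by (rule Ck_add)
qed

lemma bump_Ck: "Ck k (bump a b n)"
proof -
  have 1: "Ck k (\<lambda>x::pt. Eb (real (Suc n) * (x$j - a$j)))" for j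
  proof -
    have "Ck k (\<lambda>x::pt. Eb (real (Suc n) * (x$j) + (- real (Suc n) * a$j)))"
      by (rule Ck_compose[OF _ Ck_affine]) (simp add: Eb_smooth)
    then show ?thesis by (simp add: algebra_simps)
  qed
  have 2: "Ck k (\<lambda>x::pt. Eb (real (Suc n) * (b$j - x$j)))" for j
  proof -
    have "Ck k (\<lambda>x::pt. Eb ((- real (Suc n)) * (x$j) + (real (Suc n) * b$j)))"
      by (rule Ck_compose[OF _ Ck_affine]) (simp add: Eb_smooth)
    then show ?thesis by (simp add: algebra_simps)
  qed
  show ?thesis unfolding bump_def
    by (rule Ck_prod[OF finite]) (rule Ck_mult[OF 1 2])
qed

lemma Eb_nz: "Eb s \<noteq> 0 \<Longrightarrow> s > 0"
  by (simp add: Eb_def split: if_splits)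

lemma bump_support: "bump a b n x \<noteq> 0 \<Longrightarrow> x \<in> box a b"
proof -
  assume nz: "bump a b n x \<noteq> 0"
  have f: "Eb (real (Suc n) * (x$j - a$j)) * Eb (real (Suc n) * (b$j - x$j)) \<noteq> 0" for j
  proof
    assume "Eb (real (Suc n) * (x$j - a$j)) * Eb (real (Suc n) * (b$j - x$j)) = 0"
    then have "bump a b n x = 0" unfolding bump_def by (intro prod_zero[OF finite] bexI[of _ j]) auto
    with nz show False by simp
  qed
  have "real (Suc n) * (x$j - a$j) > 0 \<and> real (Suc n) * (b$j - x$j) > 0" for j
    using f[of j] Eb_nz by (metis mult_zero_left mult_zero_right)
  then have "a$j < x$j \<and> x$j < b$j" for j
    by (simp add: zero_less_mult_iff)
  then show ?thesis by (simp add: mem_box_cart)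
qed

lemma bump_closure: "closure {x. bump a b n x \<noteq> 0} \<subseteq> cbox a b"
proof -
  have "{x. bump a b n x \<noteq> 0} \<subseteq> box a b" using bump_support by auto
  then have "{x. bump a b n x \<noteq> 0} \<subseteq> cbox a b" using box_subset_cbox by (rule order_trans)
  then show ?thesis by (rule closure_minimal[OF _ closed_cbox])
qed

lemma bump_compact: "compact (closure {x. bump a b n x \<noteq> 0})"
proof -
  have "{x. bump a b n x \<noteq> 0} \<subseteq> box a b" using bump_support by auto
  then have "bounded {x. bump a b n x \<noteq> 0}"
    using bounded_box bounded_subset by metis
  then show ?thesis by (simp add: compact_closure)
qed

lemma bump_test: "cbox a b \<subseteq> \<Omega> \<Longrightarrow> test_fun \<Omega> (bump a b n)"
proof -
  assume "cbox a b \<subseteq> \<Omega>"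
  then have "closure {x. bump a b n x \<noteq> 0} \<subseteq> \<Omega>" using bump_closure by (rule order_trans[rotated])
  moreover have "smooth_fun (bump a b n)" unfolding smooth_fun_def using bump_Ck by (rule allI)
  ultimately show ?thesis unfolding test_fun_def using bump_compact by simp
qed

lemma bump_nonneg: "0 \<le> bump a b n x" and bump_le1: "bump a b n x \<le> 1"
  unfolding bump_def
  by (auto intro!: prod_nonneg prod_le_1 mult_nonneg_nonneg mult_le_one simp: Eb_nonneg Eb_le1)

lemma Eb_lim: "d > 0 \<Longrightarrow> (\<lambda>n. Eb (real (Suc n) * d)) \<longlonglongrightarrow> 1"
proof -
  assume d: "d > 0"
  have "(\<lambda>n. inverse (real (Suc n)) * inverse d) \<longlonglongrightarrow> 0 * inverse d"
    by (intro tendsto_mult LIMSEQ_inverse_real_of_nat tendsto_const)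
  then have "(\<lambda>n. exp (- (inverse (real (Suc n)) * inverse d))) \<longlonglongrightarrow> exp (- (0 * inverse d))"
    by (intro tendsto_exp tendsto_minus)
  moreover have "Eb (real (Suc n) * d) = exp (- (inverse (real (Suc n)) * inverse d))" for n
    using d by (simp add: Eb_def)
  ultimately show ?thesis by simp
qed

lemma bump_lim: "(\<lambda>n. bump a b n x) \<longlonglongrightarrow> indicator (box a b) x"
proof (cases "x \<in> box a b")
  case True
  then have ab: "a$j < x$j \<and> x$j < b$j" for j by (simp add: mem_box_cart)
  have l: "(\<lambda>n. Eb (real (Suc n) * (x$j - a$j)) * Eb (real (Suc n) * (b$j - x$j))) \<longlonglongrightarrow> 1 * 1" for j
    by (intro tendsto_mult Eb_lim) (use ab[of j] in auto)
  have "(\<lambda>n. bump a b n x) \<longlonglongrightarrow> (\<Prod>j\<in>(UNIV::3 set). 1 * 1)"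
    unfolding bump_def by (rule tendsto_prod) (rule l)
  then show ?thesis using True by simp
next
  case False
  then obtain j where j: "\<not> (a$j < x$j \<and> x$j < b$j)" by (auto simp: mem_box_cart)
  have "bump a b n x = 0" for n
  proof -
    have *: "Eb (real (Suc n) * (x$j - a$j)) * Eb (real (Suc n) * (b$j - x$j)) = 0"
      using j by (auto simp: Eb_def zero_less_mult_iff)
    show ?thesis unfolding bump_def by (rule prod_zero) (use * in auto)
  qed
  then show ?thesis using False by simp
qed

lemma int_cont_cpt:
  fixes f :: "'a::euclidean_space \<Rightarrow> real"
  assumes "continuous_on UNIV f" "compact S" "\<And>x. x \<notin> S \<Longrightarrow> f x = 0"
  shows "integrable lborel f"
proof -
  have "integrable lborel (\<lambda>x. indicator S x *\<^sub>R f x)"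
    using assms by (intro borel_integrable_compact) (auto intro: continuous_on_subset)
  moreover have "(\<lambda>x. indicator S x *\<^sub>R f x) = f"
  proof
    fix x show "indicator S x *\<^sub>R f x = f x" using assms(3)[of x] by (cases "x \<in> S") auto
  qed
  ultimately show ?thesis by simp
qed

lemma cont_bounded_cpt:
  fixes f :: "'a::euclidean_space \<Rightarrow> real"
  assumes "continuous_on UNIV f" "compact S" "\<And>x. x \<notin> S \<Longrightarrow> f x = 0"
  obtains M where "M \<ge> 0" "\<And>x. \<bar>f x\<bar> \<le> M"
proof -
  have "compact (f ` S)" using assms by (intro compact_continuous_image) (auto intro: continuous_on_subset)
  then obtain M where M: "\<forall>y\<in>f ` S. norm y \<le> M" using compact_imp_bounded bounded_iff by metis
  have "\<bar>f x\<bar> \<le> max M 0" for x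
    using M assms(3)[of x] by (cases "x \<in> S") auto
  then show ?thesis using that[of "max M 0"] by simp
qed

lemma int_partial_zero:
  fixes \<phi> :: "pt \<Rightarrow> real"
  assumes Ck2: "Ck 2 \<phi>" and cpt: "compact (closure {x. \<phi> x \<noteq> 0})"
  shows "integrable lborel (\<lambda>x. partial \<phi> i x)" "integral\<^sup>L lborel (\<lambda>x. partial \<phi> i x) = 0"
proof -
  define S where "S = closure {x. \<phi> x \<noteq> 0}"
  define e :: pt where "e = axis i 1"
  define d where "d x = partial \<phi> i x" for x
  have eB: "e \<in> Basis" by (simp add: e_def)
  have d_def': "d x = frechet_derivative \<phi> (at x) e" for x by (simp add: d_def partial_def e_def)
  have dphi: "\<phi> differentiable (at x)" for x using Ck2 by (simp add: numeral_2_eq_2)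
  have "Ck 1 (\<lambda>x. frechet_derivative \<phi> (at x) e)" using Ck2 eB by (simp add: numeral_2_eq_2)
  then have "Ck 0 (\<lambda>x. frechet_derivative \<phi> (at x) e)" using Ck_Suc_imp[of 0] by simp
  then have contd: "continuous_on UNIV d" by (simp add: d_def' [abs_def])
  have contphi: "continuous_on UNIV \<phi>"
    using Ck2 Ck_mono[of 0 2 \<phi>] by simp
  have Scpt: "compact S" using cpt by (simp add: S_def)
  have phi0: "\<phi> x = 0" if "x \<notin> S" for x
  proof (rule ccontr)
    assume "\<phi> x \<noteq> 0"
    then have "x \<in> {x. \<phi> x \<noteq> 0}" by simp
    then have "x \<in> S" unfolding S_def using closure_subset by (rule subsetD[rotated])
    with that show False by simp
  qed
  have d0: "d x = 0" if "x \<notin> S" for x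
  proof -
    have "((\<lambda>x. 0) has_derivative (\<lambda>h. 0)) (at x)" by simp
    then have "(\<phi> has_derivative (\<lambda>h. 0)) (at x)"
      by (rule has_derivative_transform_within_open[where s="- S"])
         (use that Scpt phi0 in \<open>auto simp: compact_imp_closed open_Compl\<close>)
    then have "frechet_derivative \<phi> (at x) = (\<lambda>h. 0)" by (metis frechet_derivative_at)
    then show ?thesis by (simp add: d_def')
  qed
  obtain M where M: "M \<ge> 0" "\<And>x. \<bar>d x\<bar> \<le> M" using cont_bounded_cpt[OF contd Scpt d0] by blast
  obtain R where R: "\<And>x. x \<in> S \<Longrightarrow> norm x \<le> R" using compact_imp_bounded[OF Scpt] bounded_iff by metis
  have int_phi: "integrable lborel \<phi>" by (rule int_cont_cpt[OF contphi Scpt phi0])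
  have meas_phib: "\<phi> \<in> borel_measurable borel" using contphi by (rule borel_measurable_continuous_onI)
  then have meas_phi: "\<phi> \<in> borel_measurable lborel" by simp
  have meas_d: "d \<in> borel_measurable lborel" using contd by (simp add: borel_measurable_continuous_onI)
  have transl: "integral\<^sup>L lborel (\<lambda>x. \<phi> (x + c)) = integral\<^sup>L lborel \<phi>" for c
  proof -
    have "integral\<^sup>L lborel \<phi> = integral\<^sup>L (distr lborel borel ((+) c)) \<phi>" by (simp add: lborel_distr_plus)
    also have "\<dots> = integral\<^sup>L lborel (\<lambda>x. \<phi> (c + x))"
      by (rule integral_distr) (auto simp: meas_phib)
    finally show ?thesis by (simp add: add.commute)
  qed
  have int_transl: "integrable lborel (\<lambda>x. \<phi> (x + c))" for c
  proof -
    have "continuous_on UNIV (\<lambda>x. \<phi> (x + c))"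
      using contphi by (intro continuous_on_compose2[OF contphi]) (auto intro: continuous_intros)
    moreover have "compact ((\<lambda>x. x - c) ` S)" using Scpt by (intro compact_continuous_image) (auto intro: continuous_intros)
    moreover have "\<phi> (x + c) = 0" if "x \<notin> (\<lambda>x. x - c) ` S" for x
      using that phi0[of "x + c"] by (metis add_diff_cancel image_eqI)
    ultimately show ?thesis by (rule int_cont_cpt)
  qed
  define h where "h n = inverse (real (Suc n))" for n
  have h: "h n > 0" "h n \<le> 1" for n by (auto simp: h_def field_simps)
  define q where "q n x = (\<phi> (x + h n *\<^sub>R e) - \<phi> x) / h n" for n x
  have gamma_deriv: "((\<lambda>t. \<phi> (x + t *\<^sub>R e)) has_real_derivative d (x + t *\<^sub>R e)) (at t)" for x t
  proof -
    have "((\<lambda>t. x + t *\<^sub>R e) has_derivative (\<lambda>s. s *\<^sub>R e)) (at t)"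
      by (auto intro!: derivative_eq_intros)
    then have "((\<lambda>t. \<phi> (x + t *\<^sub>R e)) has_derivative (\<lambda>s. frechet_derivative \<phi> (at (x + t *\<^sub>R e)) (s *\<^sub>R e))) (at t)"
      using diff_chain_at[of "\<lambda>t. x + t *\<^sub>R e" "\<lambda>s. s *\<^sub>R e" t \<phi>] dphi
      by (auto simp: frechet_derivative_works o_def)
    moreover have "linear (frechet_derivative \<phi> (at y))" for y
      using dphi frechet_derivative_works has_derivative_linear by blast
    ultimately have "((\<lambda>t. \<phi> (x + t *\<^sub>R e)) has_derivative (\<lambda>s. s * d (x + t *\<^sub>R e))) (at t)"
      by (simp add: d_def' linear_cmul)
    moreover have "(\<lambda>s. s * d (x + t *\<^sub>R e)) = (*) (d (x + t *\<^sub>R e))" by (rule ext) simp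
    ultimately show ?thesis by (simp add: has_field_derivative_def)
  qed
  have qbound: "norm (q n x) \<le> M * indicator (cball 0 (R + 1)) x" for n x
  proof (cases "x \<in> cball 0 (R + 1)")
    case True
    obtain z where "0 < z" "z < h n" and z: "\<phi> (x + h n *\<^sub>R e) - \<phi> (x + 0 *\<^sub>R e) = (h n - 0) * d (x + z *\<^sub>R e)"
      using MVT2[of 0 "h n" "\<lambda>t. \<phi> (x + t *\<^sub>R e)" "\<lambda>t. d (x + t *\<^sub>R e)"] h[of n] gamma_deriv by blast
    then have "q n x = d (x + z *\<^sub>R e)" using h[of n] by (simp add: q_def)
    then show ?thesis using True M by simp
  next
    case False
    then have nx: "norm x > R + 1" by (simp add: dist_norm)
    have "norm (x + h n *\<^sub>R e) \<ge> norm x - h n"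
      using norm_triangle_ineq2[of x "- (h n *\<^sub>R e)"] h[of n] by (simp add: e_def)
    then have "norm (x + h n *\<^sub>R e) > R" using nx h[of n] by linarith
    then have "\<phi> (x + h n *\<^sub>R e) = 0" using R phi0 by force
    moreover have "\<phi> x = 0" using R phi0 nx by force
    ultimately show ?thesis using False by (simp add: q_def)
  qed
  have qlim: "(\<lambda>n. q n x) \<longlonglongrightarrow> d x" for x
  proof -
    have "((\<lambda>t. (\<phi> (x + t *\<^sub>R e) - \<phi> (x + 0 *\<^sub>R e)) / (t - 0)) \<longlongrightarrow> d (x + 0 *\<^sub>R e)) (at 0)"
      using gamma_deriv[of x 0] by (simp only: has_field_derivative_iff)
    then have l: "((\<lambda>t. (\<phi> (x + t *\<^sub>R e) - \<phi> x) / t) \<longlongrightarrow> d x) (at 0)" by simp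
    have "filterlim h (at 0) sequentially"
      unfolding filterlim_at h_def using LIMSEQ_inverse_real_of_nat by auto
    from filterlim_compose[OF l this] show ?thesis by (simp add: q_def o_def)
  qed
  have int_w: "integrable lborel (\<lambda>x::pt. M * indicator (cball 0 (R + 1)) x :: real)"
    using emeasure_bounded_finite[OF bounded_cball, of "0::pt" "R + 1"]
    by (intro integrable_mult_right integrable_real_indicator) auto
  have meas_q: "q n \<in> borel_measurable lborel" for n
    unfolding q_def using meas_phi by measurable
  have int_q: "integral\<^sup>L lborel (q n) = 0" for n
  proof -
    have "integral\<^sup>L lborel (q n) = integral\<^sup>L lborel (\<lambda>x. \<phi> (x + h n *\<^sub>R e) - \<phi> x) / h n"
      unfolding q_def by simp
    also have "\<dots> = 0"
      using int_transl[of "h n *\<^sub>R e"] int_phi transl[of "h n *\<^sub>R e"] by simp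
    finally show ?thesis .
  qed
  have qb': "AE x in lborel. norm (q n x) \<le> M * indicator (cball 0 (R + 1)) x" for n
    using qbound by (intro AE_I2) blast
  have ql': "AE x in lborel. (\<lambda>n. q n x) \<longlonglongrightarrow> d x"
    using qlim by (intro AE_I2) blast
  have lim: "(\<lambda>n. integral\<^sup>L lborel (q n)) \<longlonglongrightarrow> integral\<^sup>L lborel d"
    by (rule integral_dominated_convergence[OF meas_d meas_q int_w ql' qb'])
  have "integrable lborel d"
    by (rule integrable_dominated_convergence[OF meas_d meas_q int_w ql' qb'])
  then show "integrable lborel (\<lambda>x. partial \<phi> i x)" by (simp add: d_def [abs_def])
  from lim int_q have "integral\<^sup>L lborel d = 0" by (simp add: LIMSEQ_const_iff)
  then show "integral\<^sup>L lborel (\<lambda>x. partial \<phi> i x) = 0" by (simp add: d_def [abs_def])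
qed

context
  fixes g :: "pt \<Rightarrow> real" and \<Omega> :: "pt set"
  assumes loc: "\<And>K. compact K \<Longrightarrow> K \<subseteq> \<Omega> \<Longrightarrow> set_integrable lebesgue K g"
    and box0: "\<And>a b. cbox a b \<subseteq> \<Omega> \<Longrightarrow> (LINT x:box a b|lebesgue. g x) = 0"
begin

lemma near_box_zero:
  assumes "box p q \<subseteq> S" "S \<subseteq> cbox p q" "cbox p q \<subseteq> \<Omega>" "S \<in> sets lebesgue"
  shows "(LINT x:S|lebesgue. g x) = 0"
proof -
  have ic: "set_integrable lebesgue (cbox p q) g" using loc assms(3) compact_cbox by blast
  have iS: "set_integrable lebesgue S g" by (rule set_integrable_subset[OF ic assms(4) assms(2)])
  have iB: "set_integrable lebesgue (box p q) g" by (rule set_integrable_subset[OF ic]) (auto simp: box_subset_cbox)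
  have "cbox p q - box p q \<in> null_sets lebesgue"
    using negligible_frontier_interval negligible_iff_null_sets by blast
  then have ae: "AE x in lebesgue. x \<notin> cbox p q - box p q" by (rule AE_not_in)
  have "AE x in lebesgue. x \<in> box p q \<longleftrightarrow> x \<in> S"
    using ae by eventually_elim (use assms(1,2) box_subset_cbox in blast)
  then have "(LINT x:S|lebesgue. g x) = (LINT x:box p q|lebesgue. g x)"
    using iS iB unfolding set_integrable_def set_borel_measurable_def
    by (intro set_integral_cong_set) (auto simp: set_borel_measurable_def)
  also have "\<dots> = 0" using box0 assms(3) .
  finally show ?thesis .
qed

lemma cbox_ae_zero:
  assumes C: "cbox c d \<subseteq> \<Omega>"
  shows "AE x in lebesgue. x \<in> cbox c d \<longrightarrow> g x = 0"
proof -
  define C where "C = cbox c d"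
  define G where "G x = indicator C x * g x" for x
  have iG: "integrable lebesgue G"
    using loc[OF compact_cbox C] unfolding set_integrable_def G_def C_def by simp
  obtain G' where G'm: "G' \<in> borel_measurable lborel" and GG': "AE x in lborel. G x = G' x"
    using completion_ex_borel_measurable_real[OF borel_measurable_integrable[OF iG]] by blast
  have GG'l: "AE x in lebesgue. G x = G' x" using GG' by (rule AE_completion)
  have G'ml: "G' \<in> borel_measurable lebesgue" using G'm by (rule measurable_completion)
  have iG'l: "integrable lebesgue G'"
    by (rule integrable_cong_AE_imp[OF iG G'ml GG'l])
  have iG': "integrable lborel G'"
    using iG'l integrable_completion[OF G'm] by simp
  have key: "(LINT x:A|lborel. G' x) = (LINT x:(A \<inter> C)|lebesgue. g x)" if A: "A \<in> sets borel" for A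
  proof -
    have "(LINT x:A|lborel. G' x) = integral\<^sup>L lebesgue (\<lambda>x. indicator A x *\<^sub>R G' x)"
      unfolding set_lebesgue_integral_def
      by (rule integral_completion[symmetric]) (use A G'm in measurable)
    also have "\<dots> = integral\<^sup>L lebesgue (\<lambda>x. indicator A x *\<^sub>R G x)"
    proof (rule integral_cong_AE)
      have Al: "A \<in> sets lebesgue" using A by (intro sets_completionI_sets) simp
      show "(\<lambda>x. indicator A x *\<^sub>R G' x) \<in> borel_measurable lebesgue"
        by (intro borel_measurable_scaleR borel_measurable_indicator Al G'ml)
      show "(\<lambda>x. indicator A x *\<^sub>R G x) \<in> borel_measurable lebesgue"
        by (intro borel_measurable_scaleR borel_measurable_indicator Al borel_measurable_integrable[OF iG])
      show "AE x in lebesgue. indicator A x *\<^sub>R G' x = indicator A x *\<^sub>R G x"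
        using GG'l by eventually_elim simp
    qed
    also have "\<dots> = (LINT x:(A \<inter> C)|lebesgue. g x)"
      unfolding set_lebesgue_integral_def G_def by (simp add: indicator_inter_arith mult.assoc)
    finally show ?thesis .
  qed
  have all0: "(LINT x:A|lborel. G' x) = 0" if "A \<in> sets lborel" for A
  proof -
    have A: "A \<in> sigma_sets UNIV (range (\<lambda>(a, b). box a b))"
      using that by (subst (asm) sets_lborel, subst (asm) borel_eq_box) (simp add: sets_measure_of)
    have st: "Int_stable (range (\<lambda>(a, b). box a b :: pt set))"
      by (auto simp: Int_stable_def box_Int_box)
    have sub: "range (\<lambda>(a, b). box a b :: pt set) \<subseteq> Pow UNIV" by auto
    from st sub A show ?thesis
    proof (induction rule: sigma_sets_induct_disjoint)
      case (basic A)
      then obtain a b where A: "A = box a b" by auto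
      define a' :: pt where "a' = (\<chi> i. max (a$i) (c$i))"
      define b' :: pt where "b' = (\<chi> i. min (b$i) (d$i))"
      have "(LINT x:(A \<inter> C)|lebesgue. g x) = 0"
      proof (rule near_box_zero[of a' b'])
        show "box a' b' \<subseteq> A \<inter> C" unfolding A C_def a'_def b'_def
          by (auto simp: mem_box_cart less_imp_le)
        show "A \<inter> C \<subseteq> cbox a' b'" unfolding A C_def a'_def b'_def
          by (auto simp: mem_box_cart less_imp_le)
        show "cbox a' b' \<subseteq> \<Omega>"
        proof -
          have "cbox a' b' \<subseteq> cbox c d" unfolding a'_def b'_def by (auto simp: mem_box_cart)
          then show ?thesis using C by blast
        qed
        show "A \<inter> C \<in> sets lebesgue" unfolding A C_def by simp
      qed
      then show ?case using key[of A] A by simp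
    next
      case empty then show ?case by (simp add: set_lebesgue_integral_def)
    next
      case (compl A)
      have Ab: "A \<in> sets borel" using compl.hyps by (simp add: borel_eq_box sets_measure_of)
      have univ: "(LINT x:UNIV|lborel. G' x) = 0"
      proof -
        have "(LINT x:(UNIV \<inter> C)|lebesgue. g x) = 0"
          by (rule near_box_zero[of c d]) (auto simp: C_def box_subset_cbox C)
        then show ?thesis using key[of UNIV] by simp
      qed
      have "(LINT x:(UNIV - A)|lborel. G' x) = (LINT x:UNIV|lborel. G' x) - (LINT x:A|lborel. G' x)"
      proof -
        have "(\<lambda>x. indicator (UNIV - A) x *\<^sub>R G' x) = (\<lambda>x. G' x - indicator A x *\<^sub>R G' x)"
          by (auto simp: indicator_def)
        moreover have "integrable lborel (\<lambda>x. indicator A x *\<^sub>R G' x)"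
          using Ab iG' by (intro integrable_mult_indicator) auto
        ultimately show ?thesis using iG' unfolding set_lebesgue_integral_def by simp
      qed
      then show ?case using univ compl.IH by simp
    next
      case (union A)
      have Ab: "A i \<in> sets lborel" for i using union.hyps(2) by (auto simp: borel_eq_box sets_measure_of)
      have "(LINT x:(\<Union>i. A i)|lborel. G' x) = (\<Sum>i. (LINT x:(A i)|lborel. G' x))"
      proof (rule lebesgue_integral_countable_add)
        show "A i \<in> sets lborel" for i by (rule Ab)
        show "A i \<inter> A j = {}" if "i \<noteq> j" for i j using union.hyps(1) that by (auto simp: disjoint_family_on_def)
        show "set_integrable lborel (\<Union>i. A i) G'"
          unfolding set_integrable_def using Ab iG' by (intro integrable_mult_indicator) auto
      qed
      then show ?case using union.IH by simp
    qed
  qed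
  have "AE x in lborel. G' x = 0" by (rule sigma_finite_measure.density_zero[OF sigma_finite_lborel iG' all0])
  then have "AE x in lebesgue. G' x = 0" by (rule AE_completion)
  with GG'l have "AE x in lebesgue. G x = 0" by eventually_elim simp
  then show ?thesis by eventually_elim (auto simp: G_def C_def)
qed

lemma open_ae_zero:
  assumes "open \<Omega>"
  shows "AE x in lebesgue. x \<in> \<Omega> \<longrightarrow> g x = 0"
proof -
  define N where "N = {x \<in> \<Omega>. g x \<noteq> 0}"
  have "negligible N"
    unfolding locally_negligible_alt[of N]
  proof
    fix x assume "x \<in> N"
    then have "x \<in> \<Omega>" by (simp add: N_def)
    then obtain e where e: "e > 0" "ball x e \<subseteq> \<Omega>" using assms openE by blast
    obtain a b where ab: "x \<in> box a b" "box a b \<subseteq> ball x (e/2)"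
      using rational_boxes[of "e/2" x] e by auto
    have "box a b \<noteq> {}" using ab by auto
    then have "cbox a b = closure (box a b)" by simp
    also have "\<dots> \<subseteq> cball x (e/2)" using ab closure_minimal[OF _ closed_cball] ball_subset_cball by blast
    also have "\<dots> \<subseteq> ball x e" using e by (auto simp: subset_eq)
    finally have cb: "cbox a b \<subseteq> \<Omega>" using e by blast
    obtain Z where Z0: "{y \<in> space lebesgue. \<not> (y \<in> cbox a b \<longrightarrow> g y = 0)} \<subseteq> Z" "Z \<in> null_sets lebesgue"
      using cbox_ae_zero[OF cb] unfolding eventually_ae_filter by blast
    then have Z: "Z \<in> null_sets lebesgue" "{y. \<not> (y \<in> cbox a b \<longrightarrow> g y = 0)} \<subseteq> Z" by auto
    have "N \<inter> box a b \<subseteq> Z" using Z box_subset_cbox N_def by blast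
    then have "negligible (N \<inter> box a b)"
      using Z negligible_iff_null_sets negligible_subset by metis
    moreover have "openin (top_of_set N) (N \<inter> box a b)"
      by (rule openin_open_Int) (rule open_box)
    ultimately show "\<exists>U. openin (top_of_set N) U \<and> x \<in> U \<and> negligible U"
      using \<open>x \<in> N\<close> ab by blast
  qed
  then have "AE x in lebesgue. x \<notin> N" using negligible_iff_null_sets AE_not_in by blast
  then show ?thesis by eventually_elim (auto simp: N_def)
qed

end

lemma partial_zero_outside:
  assumes "x \<notin> closure {x. \<phi> x \<noteq> 0}"
  shows "partial \<phi> i x = 0"
proof -
  define S where "S = closure {x. \<phi> x \<noteq> 0}"
  have phi0: "\<phi> y = 0" if "y \<notin> S" for y
  proof (rule ccontr)
    assume "\<phi> y \<noteq> 0"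
    then have "y \<in> {x. \<phi> x \<noteq> 0}" by simp
    then have "y \<in> S" unfolding S_def using closure_subset by (rule subsetD[rotated])
    with that show False by simp
  qed
  have "((\<lambda>x. 0) has_derivative (\<lambda>h. 0)) (at x)" by simp
  then have "(\<phi> has_derivative (\<lambda>h. 0)) (at x)"
  proof (rule has_derivative_transform_within_open[where s="- S"])
    show "open (- S)" unfolding S_def by (rule open_Compl) (rule closed_closure)
    show "x \<in> - S" using assms unfolding S_def by simp
    show "\<And>y. y \<in> - S \<Longrightarrow> 0 = \<phi> y" using phi0 by simp
  qed
  then have "frechet_derivative \<phi> (at x) = (\<lambda>h. 0)" by (metis frechet_derivative_at)
  then show ?thesis by (simp add: partial_def)
qed

lemma bump_partial_int:
  "integral\<^sup>L lebesgue (\<lambda>x. partial (bump a b n) i x) = 0"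
proof -
  have Ck2: "Ck 2 (bump a b n)" by (rule bump_Ck)
  have "Ck 1 (\<lambda>x. frechet_derivative (bump a b n) (at x) (axis i 1))"
    using Ck2 by (simp add: numeral_2_eq_2)
  then have "Ck 0 (\<lambda>x. frechet_derivative (bump a b n) (at x) (axis i 1))" using Ck_Suc_imp[of 0] by simp
  then have "continuous_on UNIV (\<lambda>x. partial (bump a b n) i x)" by (simp add: partial_def)
  then have m: "(\<lambda>x. partial (bump a b n) i x) \<in> borel_measurable borel"
    by (rule borel_measurable_continuous_onI)
  have "integral\<^sup>L lebesgue (\<lambda>x. partial (bump a b n) i x) = integral\<^sup>L lborel (\<lambda>x. partial (bump a b n) i x)"
    by (rule integral_completion) (use m in simp)
  also have "\<dots> = 0" by (rule int_partial_zero(2)[OF Ck2 bump_compact])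
  finally show ?thesis .
qed

lemma wgrad_const_zero:
  assumes op: "open \<Omega>" and wg: "is_weak_grad \<Omega> f gg" and fc: "\<And>x. x \<in> \<Omega> \<Longrightarrow> f x = c"
  shows "AE x in lebesgue. x \<in> \<Omega> \<longrightarrow> gg x = 0"
proof -
  have wg1: "\<forall>K. compact K \<and> K \<subseteq> \<Omega> \<longrightarrow>
        set_integrable lebesgue K f \<and> (\<forall>i. set_integrable lebesgue K (\<lambda>x. gg x $ i))"
    using wg unfolding is_weak_grad_def by (rule conjunct1)
  have wg2: "\<forall>\<phi>. test_fun \<Omega> \<phi> \<longrightarrow> (\<forall>i.
        (LINT x:\<Omega>|lebesgue. f x * partial \<phi> i x) = - (LINT x:\<Omega>|lebesgue. gg x $ i * \<phi> x))"
    using wg unfolding is_weak_grad_def by (rule conjunct2)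
  have comp: "AE x in lebesgue. x \<in> \<Omega> \<longrightarrow> gg x $ i = 0" for i
  proof (rule open_ae_zero[OF _ _ op])
    show loc: "set_integrable lebesgue K (\<lambda>x. gg x $ i)" if "compact K" "K \<subseteq> \<Omega>" for K
      using wg1 that by simp
    show "(LINT x:box a b|lebesgue. gg x $ i) = 0" if ab: "cbox a b \<subseteq> \<Omega>" for a b
    proof -
      define h where "h x = indicator (cbox a b) x * gg x $ i" for x
      have ih: "integrable lebesgue h"
        using loc[OF compact_cbox ab] unfolding set_integrable_def h_def by simp
      have mh: "h \<in> borel_measurable lebesgue" using ih by (rule borel_measurable_integrable)
      have mb: "bump a b n \<in> borel_measurable lebesgue" for n
      proof -
        have "continuous_on UNIV (bump a b n)" using bump_Ck[of 0] by simp
        then have "bump a b n \<in> borel_measurable borel" by (rule borel_measurable_continuous_onI)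
        then have "bump a b n \<in> borel_measurable lborel" by simp
        then show ?thesis by (rule measurable_completion)
      qed
      have eqn: "(LINT x:\<Omega>|lebesgue. gg x $ i * bump a b n x) = integral\<^sup>L lebesgue (\<lambda>x. h x * bump a b n x)" for n
      proof -
        have "indicator \<Omega> x *\<^sub>R (gg x $ i * bump a b n x) = h x * bump a b n x" for x
        proof (cases "bump a b n x = 0")
          case False
          then have "x \<in> box a b" by (rule bump_support)
          then have "x \<in> cbox a b" using box_subset_cbox by (rule subsetD[rotated])
          then show ?thesis using ab by (auto simp: h_def)
        qed simp
        then have e: "(\<lambda>x. indicator \<Omega> x *\<^sub>R (gg x $ i * bump a b n x)) = (\<lambda>x. h x * bump a b n x)"
          by (rule ext)
        show ?thesis unfolding set_lebesgue_integral_def e ..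
      qed
      have zero: "(LINT x:\<Omega>|lebesgue. gg x $ i * bump a b n x) = 0" for n
      proof -
        have "(LINT x:\<Omega>|lebesgue. f x * partial (bump a b n) i x) = - (LINT x:\<Omega>|lebesgue. gg x $ i * bump a b n x)"
          using wg2 bump_test[OF ab] by simp
        moreover have "(LINT x:\<Omega>|lebesgue. f x * partial (bump a b n) i x) = 0"
        proof -
          have "indicator \<Omega> x *\<^sub>R (f x * partial (bump a b n) i x) = c * partial (bump a b n) i x" for x
          proof (cases "x \<in> \<Omega>")
            case True then show ?thesis using fc by simp
          next
            case False
            then have "x \<notin> cbox a b" using ab by (auto simp: subset_eq)
            then have "x \<notin> closure {x. bump a b n x \<noteq> 0}" using bump_closure by (auto simp: subset_eq)
            then show ?thesis using False by (simp add: partial_zero_outside)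
          qed
          then have e: "(\<lambda>x. indicator \<Omega> x *\<^sub>R (f x * partial (bump a b n) i x)) = (\<lambda>x. c * partial (bump a b n) i x)"
            by (rule ext)
          have "(LINT x:\<Omega>|lebesgue. f x * partial (bump a b n) i x) = integral\<^sup>L lebesgue (\<lambda>x. c * partial (bump a b n) i x)"
            unfolding set_lebesgue_integral_def e ..
          also have "\<dots> = c * integral\<^sup>L lebesgue (\<lambda>x. partial (bump a b n) i x)" by simp
          also have "\<dots> = 0" by (simp add: bump_partial_int)
          finally show ?thesis .
        qed
        ultimately show ?thesis by simp
      qed
      have "(\<lambda>n. integral\<^sup>L lebesgue (\<lambda>x. h x * bump a b n x)) \<longlonglongrightarrow> integral\<^sup>L lebesgue (\<lambda>x. h x * indicator (box a b) x)"
      proof (rule integral_dominated_convergence[where w="\<lambda>x. norm (h x)"])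
        show "(\<lambda>x. h x * indicator (box a b) x) \<in> borel_measurable lebesgue"
          using mh by (intro borel_measurable_times borel_measurable_indicator) auto
        show "(\<lambda>x. h x * bump a b n x) \<in> borel_measurable lebesgue" for n
          using mh mb by (intro borel_measurable_times)
        show "integrable lebesgue (\<lambda>x. norm (h x))" using ih by (rule integrable_norm)
        show "AE x in lebesgue. (\<lambda>n. h x * bump a b n x) \<longlonglongrightarrow> h x * indicator (box a b) x"
          by (intro AE_I2 tendsto_mult tendsto_const bump_lim)
        show "AE x in lebesgue. norm (h x * bump a b n x) \<le> norm (h x)" for n
        proof (intro AE_I2)
          fix x
          have "norm (h x * bump a b n x) = norm (h x) * bump a b n x" using bump_nonneg[of a b n x] by (simp add: abs_mult)
          also have "\<dots> \<le> norm (h x) * 1" using bump_le1[of a b n x] by (intro mult_left_mono) auto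
          finally show "norm (h x * bump a b n x) \<le> norm (h x)" by simp
        qed
      qed
      moreover have "integral\<^sup>L lebesgue (\<lambda>x. h x * bump a b n x) = 0" for n using zero eqn by simp
      ultimately have "integral\<^sup>L lebesgue (\<lambda>x. h x * indicator (box a b) x) = 0"
        by (simp add: LIMSEQ_const_iff)
      moreover have "(LINT x:box a b|lebesgue. gg x $ i) = integral\<^sup>L lebesgue (\<lambda>x. h x * indicator (box a b) x)"
      proof -
        have "indicator (box a b) x *\<^sub>R gg x $ i = h x * indicator (box a b) x" for x
          using box_subset_cbox[of a b] by (auto simp: h_def indicator_def)
        then have e: "(\<lambda>x. indicator (box a b) x *\<^sub>R gg x $ i) = (\<lambda>x. h x * indicator (box a b) x)"
          by (rule ext)
        show ?thesis unfolding set_lebesgue_integral_def e ..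
      qed
      ultimately show ?thesis by simp
    qed
  qed
  have "AE x in lebesgue. \<forall>i\<in>UNIV. x \<in> \<Omega> \<longrightarrow> gg x $ i = 0"
    by (rule AE_finite_allI) (auto intro: comp)
  then show ?thesis by eventually_elim (auto simp: vec_eq_iff)
qed

lemma trace_sq_ge:
  fixes A :: "real^3^3"
  assumes sym: "\<And>i k. A$i$k = A$k$i"
  shows "trace (A ** A) \<ge> (trace A)^2 / 3"
proof -
  have "trace (A ** A) = (\<Sum>i\<in>UNIV. \<Sum>k\<in>UNIV. (A$i$k)^2)"
    by (simp add: trace_def matrix_matrix_mult_def power2_eq_square sym[of _ "_"])
  also have "\<dots> \<ge> (\<Sum>i\<in>UNIV. (A$i$i)^2)"
  proof (rule sum_mono)
    fix i :: 3
    show "(A$i$i)^2 \<le> (\<Sum>k\<in>UNIV. (A$i$k)^2)"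
      using member_le_sum[of i UNIV "\<lambda>k. (A$i$k)^2"] by simp
  qed
  moreover have "(\<Sum>i\<in>UNIV. (A$i$i)^2) \<ge> (trace A)^2 / 3"
  proof -
    define a b c where "a = A$1$1" "b = A$2$2" "c = A$3$3"
    have "3 * (a^2 + b^2 + c^2) - (a + b + c)^2 = (a - b)^2 + (b - c)^2 + (c - a)^2"
      by (simp add: power2_eq_square algebra_simps)
    moreover have "(a - b)^2 + (b - c)^2 + (c - a)^2 \<ge> 0" by simp
    ultimately have "(a + b + c)^2 \<le> 3 * (a^2 + b^2 + c^2)" by linarith
    then have "(a + b + c)^2 / 3 \<le> a^2 + b^2 + c^2" by (simp add: divide_le_eq mult.commute)
    then show ?thesis by (simp add: trace_def sum_3 a_b_c_def)
  qed
  ultimately show ?thesis by linarith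
qed

lemma viscous_nonneg:
  fixes G H :: "real^3^3" and T \<zeta> lam e :: real
  assumes T: "T > 0" and z: "\<zeta> \<ge> 0" and l: "lam \<ge> 0"
  defines "A \<equiv> G + transpose G - (2 / T) *\<^sub>R (e *\<^sub>R ((1/2) *\<^sub>R (H + transpose H)))"
    and "d \<equiv> trace G - (1 / T) * trace H * e"
  shows "\<zeta> * T / 2 * trace (A ** A) + T * (lam - 2 * \<zeta> / 3) * d * d \<ge> 0"
proof -
  have sym: "A$i$k = A$k$i" for i k
    by (simp add: A_def transpose_def algebra_simps)
  have trA: "trace A = 2 * d"
    using T by (simp add: A_def d_def trace_def transpose_def sum_3 field_simps)
  have "trace (A ** A) \<ge> (2 * d)^2 / 3" using trace_sq_ge[OF sym] trA by simp
  then have "\<zeta> * T / 2 * trace (A ** A) \<ge> \<zeta> * T / 2 * ((2 * d)^2 / 3)"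
    using T z by (intro mult_left_mono) auto
  moreover have "\<zeta> * T / 2 * ((2 * d)^2 / 3) + T * (lam - 2 * \<zeta> / 3) * d * d = T * lam * (d * d)"
    by (simp add: power2_eq_square algebra_simps)
  moreover have "T * lam * (d * d) \<ge> 0" using T l by simp
  ultimately show ?thesis by linarith
qed

lemma viscous_zero:
  fixes H :: "real^3^3" and T :: real
  assumes T: "T \<noteq> 0"
  shows "H + transpose H - (2 / T) *\<^sub>R (T *\<^sub>R ((1/2) *\<^sub>R (H + transpose H))) = 0"
    and "trace H - (1 / T) * trace H * T = 0"
  using T by (simp_all add: vec_eq_iff algebra_simps)

lemma quad_sym:
  assumes "\<And>a b. c a b = c b a"
  shows "(\<Sum>a\<in>S. \<Sum>b\<in>S. c a b * h a b) = (\<Sum>a\<in>S. \<Sum>b\<in>S. c a b * h b a)"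
proof -
  have "(\<Sum>a\<in>S. \<Sum>b\<in>S. c a b * h b a) = (\<Sum>a\<in>S. \<Sum>b\<in>S. c b a * h b a)"
    using assms by simp
  also have "\<dots> = (\<Sum>b\<in>S. \<Sum>a\<in>S. c b a * h b a)" by (rule sum.swap)
  finally show ?thesis by simp
qed

lemma quad_inner_nonneg:
  fixes X :: "'o \<Rightarrow> real^3" and B :: "'o \<Rightarrow> 'o \<Rightarrow> real"
  assumes psd: "\<And>\<xi>. (\<Sum>a\<in>S. \<Sum>b\<in>S. \<xi> a * B a b * \<xi> b) \<ge> 0"
  shows "(\<Sum>a\<in>S. \<Sum>b\<in>S. B a b * (X a \<bullet> X b)) \<ge> 0"
proof -
  have "(\<Sum>a\<in>S. \<Sum>b\<in>S. B a b * (X a \<bullet> X b)) = (\<Sum>a\<in>S. \<Sum>b\<in>S. \<Sum>k\<in>UNIV. X a $ k * B a b * X b $ k)"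
    by (simp add: inner_vec_def sum_distrib_left mult_ac)
  also have "\<dots> = (\<Sum>a\<in>S. \<Sum>k\<in>UNIV. \<Sum>b\<in>S. X a $ k * B a b * X b $ k)"
    by (rule sum.cong[OF refl]) (rule sum.swap)
  also have "\<dots> = (\<Sum>k\<in>UNIV. \<Sum>a\<in>S. \<Sum>b\<in>S. X a $ k * B a b * X b $ k)"
    by (rule sum.swap)
  also have "\<dots> \<ge> 0" by (rule sum_nonneg) (rule psd)
  finally show ?thesis .
qed

lemma sum_option: "(\<Sum>a\<in>(UNIV::'k::finite option set). f a) = f None + (\<Sum>\<beta>\<in>UNIV. f (Some \<beta>))"
proof -
  have "(\<Sum>a\<in>(UNIV::'k option set). f a) = (\<Sum>a\<in>insert None (range Some). f a)"
    by (simp add: UNIV_option_conv)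
  also have "\<dots> = f None + (\<Sum>a\<in>range Some. f a)" by (subst sum.insert) auto
  also have "(\<Sum>a\<in>range Some. f a) = (\<Sum>\<beta>\<in>UNIV. f (Some \<beta>))"
    by (subst sum.reindex) (auto simp: inj_on_def)
  finally show ?thesis .
qed

lemma wgrad_cong:
  assumes "\<And>y. y \<in> \<Omega> \<Longrightarrow> f y = g y"
  shows "wgrad \<Omega> f = wgrad \<Omega> g"
proof -
  have "is_weak_grad \<Omega> f G \<longleftrightarrow> is_weak_grad \<Omega> g G" for G
  proof -
    have 1: "set_integrable lebesgue K f = set_integrable lebesgue K g" if "K \<subseteq> \<Omega>" for K
      by (rule set_integrable_cong) (use that assms in auto)
    have 2: "(LINT x:\<Omega>|lebesgue. f x * p x) = (LINT x:\<Omega>|lebesgue. g x * p x)" for p :: "pt \<Rightarrow> real"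
    proof -
      have "(\<lambda>x. indicator \<Omega> x *\<^sub>R (f x * p x)) = (\<lambda>x. indicator \<Omega> x *\<^sub>R (g x * p x))"
      proof
        fix x show "indicator \<Omega> x *\<^sub>R (f x * p x) = indicator \<Omega> x *\<^sub>R (g x * p x)"
          using assms[of x] by (cases "x \<in> \<Omega>") simp_all
      qed
      then show ?thesis unfolding set_lebesgue_integral_def by simp
    qed
    show ?thesis unfolding is_weak_grad_def 2 using 1 by (simp cong: conj_cong imp_cong)
  qed
  then have "is_weak_grad \<Omega> f = is_weak_grad \<Omega> g" by (rule ext)
  then show ?thesis unfolding wgrad_def by simp
qed

lemma sum_factor: "(\<Sum>\<beta>\<in>S. a * L \<beta> * (k::real)) = a * k * sum L S"
  by (simp add: sum_distrib_left mult_ac)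

lemma Bfrak_sym:
  assumes "\<And>\<alpha> \<beta>. Bm \<alpha> \<beta> x = Bm \<beta> \<alpha> x"
  shows "Bfrak \<kappa> T Bv Bm a b x = Bfrak \<kappa> T Bv Bm b a x"
  using assms by (cases a; cases b) (auto simp: Bfrak_def)

theorem lemma4p2:
  fixes \<Omega> :: "pt set"
    and u :: "real^'k::finite \<Rightarrow> real \<Rightarrow> real"
    and z :: "'k fld"
    and lam \<zeta> \<kappa> :: "pt \<Rightarrow> real"
    and Bv :: "'k \<Rightarrow> pt \<Rightarrow> real"
    and Bm Lm :: "'k \<Rightarrow> 'k \<Rightarrow> pt \<Rightarrow> real"
    and \<epsilon> :: real
  assumes nu: "CARD('k) \<ge> 2"
    and dom: "lipschitz_domain \<Omega>"
    and u_smooth: "smooth_fun (\<lambda>(r, t). u r t)"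
    and eps: "\<epsilon> > 0"
    and L_int: "\<And>\<alpha> \<beta>. Lp \<Omega> (1 + \<epsilon>) (Lm \<alpha> \<beta>)"
    and lam_int: "Lp \<Omega> (3 + \<epsilon>) lam"
    and zeta_int: "Lp \<Omega> (3 + \<epsilon>) \<zeta>"
    and kappa_int: "Lp \<Omega> (3 + \<epsilon>) \<kappa>"
    and Bv_int: "\<And>\<alpha>. Lp \<Omega> (3 + \<epsilon>) (Bv \<alpha>)"
    and Bm_int: "\<And>\<alpha> \<beta>. Lp \<Omega> (3 + \<epsilon>) (Bm \<alpha> \<beta>)"
    and z_W13: "in_W13 \<Omega> z"
    and z_pos: "\<exists>rmin>0. AE x in lebesgue. x \<in> \<Omega> \<longrightarrow> total_rho z x \<ge> rmin"
    and regular_grad: "\<And>\<phi>. in_W13 \<Omega> \<phi> \<Longrightarrow>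
          (\<exists>g. is_weak_grad \<Omega> (\<lambda>y. ent \<phi> y / temp u z y) g) \<and>
          (\<forall>\<alpha>. \<exists>g. is_weak_grad \<Omega> (\<lambda>y. rho \<phi> \<alpha> y - chem u z \<alpha> y * ent \<phi> y / temp u z y) g)"
    and regular_int: "\<And>\<phi> \<psi>. in_W13 \<Omega> \<phi> \<Longrightarrow> in_W13 \<Omega> \<psi> \<Longrightarrow>
          set_integrable lebesgue \<Omega> (RE_integrand \<Omega> u lam \<zeta> \<kappa> Bv Bm Lm z \<phi> \<psi>)"
    and T_pos: "\<And>x. x \<in> \<Omega> \<Longrightarrow> temp u z x > 0"
    and zeta_nn: "\<And>x. x \<in> \<Omega> \<Longrightarrow> \<zeta> x \<ge> 0"
    and lam_nn: "\<And>x. x \<in> \<Omega> \<Longrightarrow> lam x \<ge> 0"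
    and Bm_sym: "\<And>x \<alpha> \<beta>. x \<in> \<Omega> \<Longrightarrow> Bm \<alpha> \<beta> x = Bm \<beta> \<alpha> x"
    and Lm_sym: "\<And>x \<alpha> \<beta>. x \<in> \<Omega> \<Longrightarrow> Lm \<alpha> \<beta> x = Lm \<beta> \<alpha> x"
    and Bfrak_psd: "\<And>x \<xi>. x \<in> \<Omega> \<Longrightarrow>
          (\<Sum>a\<in>UNIV. \<Sum>b\<in>UNIV. \<xi> a * Bfrak \<kappa> (temp u z) Bv Bm a b x * \<xi> b) \<ge> 0"
    and Lm_psd: "\<And>x \<xi>. x \<in> \<Omega> \<Longrightarrow> (\<Sum>\<alpha>\<in>UNIV. \<Sum>\<beta>\<in>UNIV. \<xi> \<alpha> * Lm \<alpha> \<beta> x * \<xi> \<beta>) \<ge> 0"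
    and Bv_sum: "\<And>x. x \<in> \<Omega> \<Longrightarrow> (\<Sum>\<beta>\<in>UNIV. Bv \<beta> x) = 0"
    and Bm_sum: "\<And>x \<alpha>. x \<in> \<Omega> \<Longrightarrow> (\<Sum>\<beta>\<in>UNIV. Bm \<alpha> \<beta> x) = 0"
    and Lm_sum: "\<And>x \<alpha>. x \<in> \<Omega> \<Longrightarrow> (\<Sum>\<beta>\<in>UNIV. Lm \<alpha> \<beta> x) = 0"
    and dH_W13: "in_W13 \<Omega> (dH u z)"
  shows "(\<forall>\<phi> \<psi>. in_W13 \<Omega> \<phi> \<and> in_W13 \<Omega> \<psi> \<longrightarrow>
            RE \<Omega> u lam \<zeta> \<kappa> Bv Bm Lm z \<phi> \<psi> = RE \<Omega> u lam \<zeta> \<kappa> Bv Bm Lm z \<psi> \<phi>)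
       \<and> (\<forall>\<phi>. in_W13 \<Omega> \<phi> \<longrightarrow> RE \<Omega> u lam \<zeta> \<kappa> Bv Bm Lm z \<phi> \<phi> \<ge> 0)
       \<and> (\<forall>\<phi>. in_W13 \<Omega> \<phi> \<longrightarrow> RE \<Omega> u lam \<zeta> \<kappa> Bv Bm Lm z \<phi> (dH u z) = 0)"
proof -
  have op: "open \<Omega>" using dom by (simp add: lipschitz_domain_def)
  let ?RI = "RE_integrand \<Omega> u lam \<zeta> \<kappa> Bv Bm Lm z"
  have RIeq: "?RI w1 w2 x =
      \<zeta> x * temp u z x / 2 * trace (
        (grad_vec \<Omega> (mom w1) x + transpose (grad_vec \<Omega> (mom w1) x)
          - (2 / temp u z x) *\<^sub>R (ent w1 x *\<^sub>R Dmat \<Omega> z x)) **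
        (grad_vec \<Omega> (mom w2) x + transpose (grad_vec \<Omega> (mom w2) x)
          - (2 / temp u z x) *\<^sub>R (ent w2 x *\<^sub>R Dmat \<Omega> z x)))
      + temp u z x * (lam x - 2 * \<zeta> x / 3)
          * (divg \<Omega> (mom w1) x - (1 / temp u z x) * divg \<Omega> (vel z) x * ent w1 x)
          * (divg \<Omega> (mom w2) x - (1 / temp u z x) * divg \<Omega> (vel z) x * ent w2 x)
      + (\<Sum>a\<in>UNIV. \<Sum>b\<in>UNIV. Bfrak \<kappa> (temp u z) Bv Bm a b x * (Xf \<Omega> u z a w1 x \<bullet> Xf \<Omega> u z b w2 x))
      + temp u z x * (\<Sum>\<alpha>\<in>UNIV. \<Sum>\<beta>\<in>UNIV.
          (rho w1 \<alpha> x - chem u z \<alpha> x / temp u z x * ent w1 x) * Lm \<alpha> \<beta> x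
          * (rho w2 \<beta> x - chem u z \<beta> x / temp u z x * ent w2 x))" for w1 w2 x
    unfolding RE_integrand_def Let_def ..
  have Tpos: "x \<in> \<Omega> \<Longrightarrow> temp u z x > 0" for x using T_pos .
  have pw_sym: "?RI \<phi> \<psi> x = ?RI \<psi> \<phi> x" if x: "x \<in> \<Omega>" for \<phi> \<psi> x
  proof -
    have t1: "trace (P ** Q) = trace (Q ** P)" for P Q :: "real^3^3" by (rule trace_mul_sym)
    have t3: "(\<Sum>a\<in>UNIV. \<Sum>b\<in>UNIV. Bfrak \<kappa> (temp u z) Bv Bm a b x * (Xf \<Omega> u z a \<phi> x \<bullet> Xf \<Omega> u z b \<psi> x))
            = (\<Sum>a\<in>UNIV. \<Sum>b\<in>UNIV. Bfrak \<kappa> (temp u z) Bv Bm a b x * (Xf \<Omega> u z a \<psi> x \<bullet> Xf \<Omega> u z b \<phi> x))"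
    proof -
      have "(\<Sum>a\<in>UNIV. \<Sum>b\<in>UNIV. Bfrak \<kappa> (temp u z) Bv Bm a b x * (Xf \<Omega> u z a \<phi> x \<bullet> Xf \<Omega> u z b \<psi> x))
          = (\<Sum>a\<in>UNIV. \<Sum>b\<in>UNIV. Bfrak \<kappa> (temp u z) Bv Bm a b x * (Xf \<Omega> u z b \<phi> x \<bullet> Xf \<Omega> u z a \<psi> x))"
        by (rule quad_sym) (rule Bfrak_sym, rule Bm_sym[OF x])
      then show ?thesis by (simp add: inner_commute)
    qed
    have t4: "(\<Sum>\<alpha>\<in>UNIV. \<Sum>\<beta>\<in>UNIV. (rho \<phi> \<alpha> x - chem u z \<alpha> x / temp u z x * ent \<phi> x) * Lm \<alpha> \<beta> x
                 * (rho \<psi> \<beta> x - chem u z \<beta> x / temp u z x * ent \<psi> x))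
            = (\<Sum>\<alpha>\<in>UNIV. \<Sum>\<beta>\<in>UNIV. (rho \<psi> \<alpha> x - chem u z \<alpha> x / temp u z x * ent \<psi> x) * Lm \<alpha> \<beta> x
                 * (rho \<phi> \<beta> x - chem u z \<beta> x / temp u z x * ent \<phi> x))"
    proof -
      define r where "r w \<alpha> = rho w \<alpha> x - chem u z \<alpha> x / temp u z x * ent w x" for w \<alpha>
      have "(\<Sum>\<alpha>\<in>UNIV. \<Sum>\<beta>\<in>UNIV. Lm \<alpha> \<beta> x * (r \<phi> \<alpha> * r \<psi> \<beta>))
          = (\<Sum>\<alpha>\<in>UNIV. \<Sum>\<beta>\<in>UNIV. Lm \<alpha> \<beta> x * (r \<phi> \<beta> * r \<psi> \<alpha>))"
        by (rule quad_sym) (rule Lm_sym[OF x])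
      then have "(\<Sum>\<alpha>\<in>UNIV. \<Sum>\<beta>\<in>UNIV. r \<phi> \<alpha> * Lm \<alpha> \<beta> x * r \<psi> \<beta>)
          = (\<Sum>\<alpha>\<in>UNIV. \<Sum>\<beta>\<in>UNIV. r \<psi> \<alpha> * Lm \<alpha> \<beta> x * r \<phi> \<beta>)"
        by (simp add: mult_ac)
      then show ?thesis by (simp add: r_def)
    qed
    have tr: "trace ((grad_vec \<Omega> (mom \<phi>) x + transpose (grad_vec \<Omega> (mom \<phi>) x)
          - (2 / temp u z x) *\<^sub>R (ent \<phi> x *\<^sub>R Dmat \<Omega> z x)) **
        (grad_vec \<Omega> (mom \<psi>) x + transpose (grad_vec \<Omega> (mom \<psi>) x)
          - (2 / temp u z x) *\<^sub>R (ent \<psi> x *\<^sub>R Dmat \<Omega> z x)))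
      = trace ((grad_vec \<Omega> (mom \<psi>) x + transpose (grad_vec \<Omega> (mom \<psi>) x)
          - (2 / temp u z x) *\<^sub>R (ent \<psi> x *\<^sub>R Dmat \<Omega> z x)) **
        (grad_vec \<Omega> (mom \<phi>) x + transpose (grad_vec \<Omega> (mom \<phi>) x)
          - (2 / temp u z x) *\<^sub>R (ent \<phi> x *\<^sub>R Dmat \<Omega> z x)))"
      by (rule t1)
    show ?thesis unfolding RIeq[of \<phi> \<psi> x] RIeq[of \<psi> \<phi> x] t3 t4 tr
      by (simp add: mult_ac)
  qed

  have pw_nn: "?RI \<phi> \<phi> x \<ge> 0" if x: "x \<in> \<Omega>" for \<phi> x
  proof -
    have v: "\<zeta> x * temp u z x / 2 * trace (
        (grad_vec \<Omega> (mom \<phi>) x + transpose (grad_vec \<Omega> (mom \<phi>) x)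
          - (2 / temp u z x) *\<^sub>R (ent \<phi> x *\<^sub>R Dmat \<Omega> z x)) **
        (grad_vec \<Omega> (mom \<phi>) x + transpose (grad_vec \<Omega> (mom \<phi>) x)
          - (2 / temp u z x) *\<^sub>R (ent \<phi> x *\<^sub>R Dmat \<Omega> z x)))
      + temp u z x * (lam x - 2 * \<zeta> x / 3)
          * (divg \<Omega> (mom \<phi>) x - (1 / temp u z x) * divg \<Omega> (vel z) x * ent \<phi> x)
          * (divg \<Omega> (mom \<phi>) x - (1 / temp u z x) * divg \<Omega> (vel z) x * ent \<phi> x) \<ge> 0"
      using viscous_nonneg[OF Tpos[OF x] zeta_nn[OF x] lam_nn[OF x],
          where G="grad_vec \<Omega> (mom \<phi>) x" and H="grad_vec \<Omega> (vel z) x" and e="ent \<phi> x"]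
      unfolding Dmat_def divg_def .
    have b: "(\<Sum>a\<in>UNIV. \<Sum>b\<in>UNIV. Bfrak \<kappa> (temp u z) Bv Bm a b x * (Xf \<Omega> u z a \<phi> x \<bullet> Xf \<Omega> u z b \<phi> x)) \<ge> 0"
      by (rule quad_inner_nonneg) (rule Bfrak_psd[OF x])
    have l: "temp u z x * (\<Sum>\<alpha>\<in>UNIV. \<Sum>\<beta>\<in>UNIV.
          (rho \<phi> \<alpha> x - chem u z \<alpha> x / temp u z x * ent \<phi> x) * Lm \<alpha> \<beta> x
          * (rho \<phi> \<beta> x - chem u z \<beta> x / temp u z x * ent \<phi> x)) \<ge> 0"
      using Lm_psd[OF x, of "\<lambda>\<alpha>. rho \<phi> \<alpha> x - chem u z \<alpha> x / temp u z x * ent \<phi> x"] Tpos[OF x]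
      by simp
    show ?thesis unfolding RIeq[of \<phi> \<phi> x] using v b l by linarith
  qed
  define f0 where "f0 = (\<lambda>y. ent (dH u z) y / temp u z y)"
  have "\<exists>g. is_weak_grad \<Omega> f0 g" using regular_grad[OF dH_W13] by (simp add: f0_def)
  then have wg0: "is_weak_grad \<Omega> f0 (wgrad \<Omega> f0)" unfolding wgrad_def by (rule someI_ex)
  have AE0: "AE x in lebesgue. x \<in> \<Omega> \<longrightarrow> wgrad \<Omega> f0 x = 0"
  proof (rule wgrad_const_zero[OF op wg0, of 1])
    fix x assume "x \<in> \<Omega>"
    then show "f0 x = 1" using Tpos[of x] by (simp add: f0_def dH_def)
  qed
  have mdh: "mom (dH u z) = vel z" "ent (dH u z) = temp u z"
     "rho (dH u z) \<beta> y = - (vel z y \<bullet> vel z y) / 2 + chem u z \<beta> y" for \<beta> y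
    by (simp_all add: dH_def)
  define G where "G = wgrad \<Omega> (\<lambda>y. - (vel z y \<bullet> vel z y) / 2)"
  have XS: "Xf \<Omega> u z (Some \<beta>) (dH u z) = G" for \<beta>
  proof -
    have "Xf \<Omega> u z (Some \<beta>) (dH u z) =
        wgrad \<Omega> (\<lambda>y. rho (dH u z) \<beta> y - chem u z \<beta> y * ent (dH u z) y / temp u z y)"
      by (simp add: Xf_def)
    also have "\<dots> = G" unfolding G_def
    proof (rule wgrad_cong)
      fix y assume "y \<in> \<Omega>"
      then have "temp u z y \<noteq> 0" using Tpos[of y] by simp
      then show "rho (dH u z) \<beta> y - chem u z \<beta> y * ent (dH u z) y / temp u z y = - (vel z y \<bullet> vel z y) / 2"
        by (simp add: mdh)
    qed
    finally show ?thesis .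
  qed
  have XN: "Xf \<Omega> u z None (dH u z) = wgrad \<Omega> f0" by (simp add: Xf_def f0_def)
  have pw0: "?RI \<phi> (dH u z) x = 0" if x: "x \<in> \<Omega>" and g0: "wgrad \<Omega> f0 x = 0" for \<phi> x
  proof -
    have Tne: "temp u z x \<noteq> 0" using Tpos[OF x] by simp
    have A0: "grad_vec \<Omega> (mom (dH u z)) x + transpose (grad_vec \<Omega> (mom (dH u z)) x)
          - (2 / temp u z x) *\<^sub>R (ent (dH u z) x *\<^sub>R Dmat \<Omega> z x) = 0"
      using viscous_zero(1)[OF Tne, of "grad_vec \<Omega> (vel z) x"] by (simp add: mdh Dmat_def)
    have d0: "divg \<Omega> (mom (dH u z)) x - (1 / temp u z x) * divg \<Omega> (vel z) x * ent (dH u z) x = 0"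
      using viscous_zero(2)[OF Tne, of "grad_vec \<Omega> (vel z) x"] by (simp add: mdh divg_def)
    have tr0: "trace (M ** (0::real^3^3)) = 0" for M by (simp add: trace_def matrix_matrix_mult_def)
    have B0: "(\<Sum>a\<in>UNIV. \<Sum>b\<in>UNIV. Bfrak \<kappa> (temp u z) Bv Bm a b x * (Xf \<Omega> u z a \<phi> x \<bullet> Xf \<Omega> u z b (dH u z) x)) = 0"
    proof -
      have "(\<Sum>b\<in>UNIV. Bfrak \<kappa> (temp u z) Bv Bm a b x * (Xf \<Omega> u z a \<phi> x \<bullet> Xf \<Omega> u z b (dH u z) x)) = 0" for a
      proof -
        have "(\<Sum>b\<in>UNIV. Bfrak \<kappa> (temp u z) Bv Bm a b x * (Xf \<Omega> u z a \<phi> x \<bullet> Xf \<Omega> u z b (dH u z) x))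
            = Bfrak \<kappa> (temp u z) Bv Bm a None x * (Xf \<Omega> u z a \<phi> x \<bullet> 0)
              + (\<Sum>\<beta>\<in>UNIV. Bfrak \<kappa> (temp u z) Bv Bm a (Some \<beta>) x * (Xf \<Omega> u z a \<phi> x \<bullet> G x))"
          by (simp add: sum_option XN XS g0)
        also have "\<dots> = (Xf \<Omega> u z a \<phi> x \<bullet> G x) * (\<Sum>\<beta>\<in>UNIV. Bfrak \<kappa> (temp u z) Bv Bm a (Some \<beta>) x)"
          by (simp add: sum_distrib_left mult_ac)
        also have "(\<Sum>\<beta>\<in>UNIV. Bfrak \<kappa> (temp u z) Bv Bm a (Some \<beta>) x) = 0"
          using Bv_sum[OF x] Bm_sum[OF x] by (cases a) (simp_all add: Bfrak_def)
        finally show ?thesis by simp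
      qed
      then show ?thesis by simp
    qed
    have L0: "(\<Sum>\<alpha>\<in>UNIV. \<Sum>\<beta>\<in>UNIV.
          (rho \<phi> \<alpha> x - chem u z \<alpha> x / temp u z x * ent \<phi> x) * Lm \<alpha> \<beta> x
          * (rho (dH u z) \<beta> x - chem u z \<beta> x / temp u z x * ent (dH u z) x)) = 0"
    proof -
      have r: "rho (dH u z) \<beta> x - chem u z \<beta> x / temp u z x * ent (dH u z) x = - (vel z x \<bullet> vel z x) / 2" for \<beta>
        using Tne by (simp add: mdh)
      have "(\<Sum>\<alpha>\<in>UNIV. \<Sum>\<beta>\<in>UNIV.
          (rho \<phi> \<alpha> x - chem u z \<alpha> x / temp u z x * ent \<phi> x) * Lm \<alpha> \<beta> x
          * (rho (dH u z) \<beta> x - chem u z \<beta> x / temp u z x * ent (dH u z) x))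
        = (\<Sum>\<alpha>\<in>UNIV. \<Sum>\<beta>\<in>UNIV.
          (rho \<phi> \<alpha> x - chem u z \<alpha> x / temp u z x * ent \<phi> x) * Lm \<alpha> \<beta> x
          * (- (vel z x \<bullet> vel z x) / 2))" by (simp only: r)
      also have "\<dots> = (\<Sum>\<alpha>\<in>UNIV. (rho \<phi> \<alpha> x - chem u z \<alpha> x / temp u z x * ent \<phi> x)
          * (- (vel z x \<bullet> vel z x) / 2) * (\<Sum>\<beta>\<in>UNIV. Lm \<alpha> \<beta> x))"
        by (simp only: sum_factor)
      also have "\<dots> = 0" using Lm_sum[OF x] by simp
      finally show ?thesis .
    qed
    show ?thesis unfolding RIeq[of \<phi> "dH u z" x] A0 d0 B0 L0 tr0 by simp
  qed
  have Om: "\<Omega> \<in> sets lebesgue" using op by (intro sets_completionI_sets) simp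
  show ?thesis
  proof (intro conjI allI impI)
    fix \<phi> \<psi> :: "'k fld"
    show "RE \<Omega> u lam \<zeta> \<kappa> Bv Bm Lm z \<phi> \<psi> = RE \<Omega> u lam \<zeta> \<kappa> Bv Bm Lm z \<psi> \<phi>"
      unfolding RE_def by (rule set_lebesgue_integral_cong[OF Om]) (use pw_sym in blast)
  next
    fix \<phi> :: "'k fld"
    show "RE \<Omega> u lam \<zeta> \<kappa> Bv Bm Lm z \<phi> \<phi> \<ge> 0"
      unfolding RE_def set_lebesgue_integral_def
    proof (rule integral_nonneg_AE, rule AE_I2)
      fix x show "0 \<le> indicator \<Omega> x *\<^sub>R ?RI \<phi> \<phi> x"
        using pw_nn[of x \<phi>] by (cases "x \<in> \<Omega>") simp_all
    qed
  next
    fix \<phi> :: "'k fld"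
    show "RE \<Omega> u lam \<zeta> \<kappa> Bv Bm Lm z \<phi> (dH u z) = 0"
      unfolding RE_def set_lebesgue_integral_def
    proof (rule integral_eq_zero_AE)
      show "AE x in lebesgue. indicator \<Omega> x *\<^sub>R ?RI \<phi> (dH u z) x = 0"
        using AE0
      proof eventually_elim
        case (elim x)
        then show ?case using pw0[of x \<phi>] by (cases "x \<in> \<Omega>") simp_all
      qed
    qed
  qed
qed

end
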